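(* With $D$, $K$, $\star$, $D_1=D[X]$, $\mathcal S_1^\star$ and $[\star]$ as defined in the context, for every $E\in\overline{\boldsymbol F}(D)$: (c) $(ED[X])^{[\star]}\cap K=ED_1[Y]_{\mathcal S_1^\star}\cap K=E^{\widetilde\star}$; (d) $(ED[X])^{[\star]}=E^{\widetilde\star}D[X]$.
   Context: $D$ is an integral domain with quotient field $K$, $X,Y$ indeterminates, $\star$ a semistar operation on $D$, $D_1:=D[X]$, $K_1:=K(X)$. $\overline{\boldsymbol F}(A)$ is the set of nonzero $A$-submodules of the quotient field of $A$. A semistar operation on $A$ is a map $\star:\overline{\boldsymbol F}(A)\to\overline{\boldsymbol F}(A)$ with $(xE)^\star=xE^\star$ for nonzero $x$ in the quotient field, $E\subseteq F\Rightarrow E^\star\subseteq F^\star$, $E\subseteq E^\star$, $(E^\star)^\star=E^\star$. $E^{\star_f}=\bigcup\{F^\star\mid F\subseteq E,\ F$ nonzero finitely generated fractional ideal$\}$. A nonzero ideal $I$ is a quasi-$\star$-ideal if $I^\star\cap D=I$; $\mathrm{QMax}^\star(D)$ is the set of maximal elements among proper quasi-$\star$-ideals; $E^{\widetilde\star}=\bigcap\{ED_P\mid P\in\mathrm{QMax}^{\star_f}(D)\}$. $\boldsymbol\Delta_1^\star:=\{Q_1\in\mathrm{Spec}(D_1)\mid Q_1\cap D=(0),\ \text{or } Q_1=(Q_1\cap D)[X]\text{ and }(Q_1\cap D)^{\star_f}\subsetneq D^\star\}$; $\mathcal S_1^\star:=D_1[Y]\setminus\bigcup\{Q_1[Y]\mid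 Q_1\in\boldsymbol\Delta_1^\star\}$; $[\star]$ is the semistar operation on $D_1$ given by $E^{[\star]}:=E[Y]_{\mathcal S_1^\star}\cap K_1$ (for $E\in\overline{\boldsymbol F}(D_1)$), where $E[Y]_{\mathcal S_1^\star}$ is the $D_1[Y]_{\mathcal S_1^\star}$-submodule of $K(X,Y)$ generated by $E$. *)

theory Defs
  imports "HOL-Computational_Algebra.Polynomial"
begin

text \<open>All rings live inside an ambient field of type 'a (playing the role of a field
containing K(X,Y)).  Subrings of a field are automatically integral domains.\<close>

definition subring :: "'a::field set \<Rightarrow> bool" where
  "subring A \<longleftrightarrow> 0 \<in> A \<and> 1 \<in> A \<and> (\<forall>a\<in>A. \<forall>b\<in>A. a + b \<in> A \<and> a - b \<in> A \<and> a * b \<in> A)"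

definition qf :: "'a::field set \<Rightarrow> 'a set" where
  "qf A = {a / b | a b. a \<in> A \<and> b \<in> A \<and> b \<noteq> 0}"

definition polyring :: "'a::field set \<Rightarrow> 'a \<Rightarrow> 'a set" where
  "polyring A x = {poly p x | p. \<forall>i. coeff p i \<in> A}"

text \<open>x is transcendental (an indeterminate) over the field L.\<close>
definition transc_over :: "'a::field set \<Rightarrow> 'a \<Rightarrow> bool" where
  "transc_over L x \<longleftrightarrow> (\<forall>p. (\<forall>i. coeff p i \<in> L) \<longrightarrow> poly p x = 0 \<longrightarrow> p = 0)"

definition genmod :: "'a::field set \<Rightarrow> 'a set \<Rightarrow> 'a set" where
  "genmod R E = {\<Sum>s\<in>S. c s * s | S c. finite S \<and> S \<subseteq> E \<and> (\<forall>s. c s \<in> R)}"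

definition is_module :: "'a::field set \<Rightarrow> 'a set \<Rightarrow> bool" where
  "is_module A M \<longleftrightarrow> 0 \<in> M \<and> (\<forall>a\<in>M. \<forall>b\<in>M. a + b \<in> M) \<and> (\<forall>r\<in>A. \<forall>m\<in>M. r * m \<in> M)"

definition Fbar :: "'a::field set \<Rightarrow> 'a set set" where
  "Fbar A = {M. M \<subseteq> qf A \<and> is_module A M \<and> M \<noteq> {0}}"

definition semistar :: "'a::field set \<Rightarrow> ('a set \<Rightarrow> 'a set) \<Rightarrow> bool" where
  "semistar A st \<longleftrightarrow>
     (\<forall>E\<in>Fbar A. st E \<in> Fbar A) \<and>
     (\<forall>x\<in>qf A. \<forall>E\<in>Fbar A. x \<noteq> 0 \<longrightarrow> st ((\<lambda>e. x * e) ` E) = (\<lambda>e. x * e) ` st E) \<and>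
     (\<forall>E\<in>Fbar A. \<forall>F\<in>Fbar A. E \<subseteq> F \<longrightarrow> st E \<subseteq> st F) \<and>
     (\<forall>E\<in>Fbar A. E \<subseteq> st E) \<and>
     (\<forall>E\<in>Fbar A. st (st E) = st E)"

definition fg_frac :: "'a::field set \<Rightarrow> 'a set \<Rightarrow> bool" where
  "fg_frac A F \<longleftrightarrow> F \<in> Fbar A \<and> (\<exists>S. finite S \<and> S \<subseteq> qf A \<and> F = genmod A S)
      \<and> (\<exists>d\<in>A. d \<noteq> 0 \<and> (\<lambda>f. d * f) ` F \<subseteq> A)"

definition star_f :: "'a::field set \<Rightarrow> ('a set \<Rightarrow> 'a set) \<Rightarrow> 'a set \<Rightarrow> 'a set" where
  "star_f A st E = \<Union>{st F | F. F \<subseteq> E \<and> fg_frac A F}"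

definition ideal_of :: "'a::field set \<Rightarrow> 'a set \<Rightarrow> bool" where
  "ideal_of A I \<longleftrightarrow> I \<subseteq> A \<and> is_module A I"

definition prime_ideal_of :: "'a::field set \<Rightarrow> 'a set \<Rightarrow> bool" where
  "prime_ideal_of A P \<longleftrightarrow> ideal_of A P \<and> P \<noteq> A \<and>
     (\<forall>a\<in>A. \<forall>b\<in>A. a * b \<in> P \<longrightarrow> a \<in> P \<or> b \<in> P)"

definition quasi_star_ideal :: "'a::field set \<Rightarrow> ('a set \<Rightarrow> 'a set) \<Rightarrow> 'a set \<Rightarrow> bool" where
  "quasi_star_ideal A st I \<longleftrightarrow> ideal_of A I \<and> I \<noteq> {0} \<and> st I \<inter> A = I"

definition QMax :: "'a::field set \<Rightarrow> ('a set \<Rightarrow> 'a set) \<Rightarrow> 'a set set" where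
  "QMax A st = {P. quasi_star_ideal A st P \<and> P \<noteq> A \<and>
       (\<forall>Q. quasi_star_ideal A st Q \<and> Q \<noteq> A \<and> P \<subseteq> Q \<longrightarrow> Q = P)}"

definition loc :: "'a::field set \<Rightarrow> 'a set \<Rightarrow> 'a set" where
  "loc A P = {a / s | a s. a \<in> A \<and> s \<in> A - P}"

text \<open>\<open>E^{\<widetilde>\<star>}\<close>; intersected with the quotient field so that the empty
  intersection is K.\<close>
definition star_tilde :: "'a::field set \<Rightarrow> ('a set \<Rightarrow> 'a set) \<Rightarrow> 'a set \<Rightarrow> 'a set" where
  "star_tilde A st E = qf A \<inter> \<Inter>{genmod (loc A P) E | P. P \<in> QMax A (star_f A st)}"

definition Delta1 :: "'a::field set \<Rightarrow> 'a \<Rightarrow> ('a set \<Rightarrow> 'a set) \<Rightarrow> 'a set set" where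
  "Delta1 D X st = {Q1. prime_ideal_of (polyring D X) Q1 \<and>
      (Q1 \<inter> D = {0} \<or>
       (Q1 = polyring (Q1 \<inter> D) X \<and> star_f D st (Q1 \<inter> D) \<subset> st D))}"

definition S1 :: "'a::field set \<Rightarrow> 'a \<Rightarrow> 'a \<Rightarrow> ('a set \<Rightarrow> 'a set) \<Rightarrow> 'a set" where
  "S1 D X Y st = polyring (polyring D X) Y - \<Union>{polyring Q1 Y | Q1. Q1 \<in> Delta1 D X st}"

definition D1YS :: "'a::field set \<Rightarrow> 'a \<Rightarrow> 'a \<Rightarrow> ('a set \<Rightarrow> 'a set) \<Rightarrow> 'a set" where
  "D1YS D X Y st = {a / s | a s. a \<in> polyring (polyring D X) Y \<and> s \<in> S1 D X Y st}"

definition bracket_star :: "'a::field set \<Rightarrow> 'a \<Rightarrow> 'a \<Rightarrow> ('a set \<Rightarrow> 'a set) \<Rightarrow> 'a set \<Rightarrow> 'a set" where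
  "bracket_star D X Y st E = genmod (D1YS D X Y st) E \<inter> qf (polyring D X)"

end

theory Submission
  imports Defs
begin


lemma subringD:
  assumes "subring A"
  shows "0 \<in> A" "1 \<in> A" "a \<in> A \<Longrightarrow> b \<in> A \<Longrightarrow> a + b \<in> A"
    "a \<in> A \<Longrightarrow> b \<in> A \<Longrightarrow> a - b \<in> A" "a \<in> A \<Longrightarrow> b \<in> A \<Longrightarrow> a * b \<in> A"
  using assms unfolding subring_def by auto

lemma subring_uminus: "subring A \<Longrightarrow> a \<in> A \<Longrightarrow> - a \<in> A"
  using subringD(4)[of A 0 a] subringD(1)[of A] by simp

lemma subring_sum: "subring A \<Longrightarrow> (\<And>i. i \<in> I \<Longrightarrow> f i \<in> A) \<Longrightarrow> sum f I \<in> A"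
proof (induction I rule: infinite_finite_induct)
  case (infinite A) then show ?case by (simp add: subringD)
next
  case empty then show ?case by (simp add: subringD)
next
  case (insert x F) then show ?case by (simp add: subringD)
qed

lemma subring_prod: "subring A \<Longrightarrow> (\<And>i. i \<in> I \<Longrightarrow> f i \<in> A) \<Longrightarrow> prod f I \<in> A"
proof (induction I rule: infinite_finite_induct)
  case (infinite A) then show ?case by (simp add: subringD)
next
  case empty then show ?case by (simp add: subringD)
next
  case (insert x F) then show ?case by (simp add: subringD)
qed

lemma subring_power: "subring A \<Longrightarrow> a \<in> A \<Longrightarrow> a ^ n \<in> A"
  by (induction n) (auto simp: subringD)

lemma qf_subset: "subring A \<Longrightarrow> A \<subseteq> qf A"
  unfolding qf_def by (force intro: exI[of _ 1] simp: subringD)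

lemma qf_subring:
  assumes A: "subring A" shows "subring (qf A)"
  unfolding subring_def
proof (intro conjI ballI)
  show "0 \<in> qf A" "1 \<in> qf A" using qf_subset[OF A] A by (auto simp: subringD)
next
  fix x y assume x: "x \<in> qf A" and y: "y \<in> qf A"
  then obtain a b c d where ab: "a \<in> A" "b \<in> A" "b \<noteq> 0" "x = a / b"
    and cd: "c \<in> A" "d \<in> A" "d \<noteq> 0" "y = c / d" unfolding qf_def by blast
  have bd: "b * d \<in> A" "b * d \<noteq> 0" using ab cd A by (auto simp: subringD)
  have "x + y = (a * d + c * b) / (b * d)" using ab cd by (simp add: field_simps)
  moreover have "a * d + c * b \<in> A" using ab cd A by (auto simp: subringD)
  ultimately show "x + y \<in> qf A" using bd unfolding qf_def by blast
  have "x - y = (a * d - c * b) / (b * d)" using ab cd by (simp add: field_simps)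
  moreover have "a * d - c * b \<in> A" using ab cd A by (auto simp: subringD)
  ultimately show "x - y \<in> qf A" using bd unfolding qf_def by blast
  have "x * y = (a * c) / (b * d)" using ab cd by (simp add: field_simps)
  moreover have "a * c \<in> A" using ab cd A by (auto simp: subringD)
  ultimately show "x * y \<in> qf A" using bd unfolding qf_def by blast
qed

lemma qf_inverse:
  assumes A: "subring A" and x: "x \<in> qf A" shows "1 / x \<in> qf A"
proof (cases "x = 0")
  case True then show ?thesis using qf_subring[OF A] by (simp add: subringD)
next
  case False
  obtain a b where ab: "a \<in> A" "b \<in> A" "b \<noteq> 0" "x = a / b" using x unfolding qf_def by blast
  then have "a \<noteq> 0" using False by auto
  then show ?thesis using ab unfolding qf_def by auto
qed

lemma qf_divide:
  assumes A: "subring A" and x: "x \<in> qf A" and y: "y \<in> qf A" shows "x / y \<in> qf A"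
proof -
  have "x * (1 / y) \<in> qf A" using subringD(5)[OF qf_subring[OF A] x qf_inverse[OF A y]] .
  then show ?thesis by simp
qed

section \<open>Polynomial rings\<close>

lemma coeff_mult_in:
  assumes "subring A" "\<And>i. coeff p i \<in> A" "\<And>i. coeff q i \<in> A"
  shows "coeff (p * q) n \<in> A"
  unfolding coeff_mult using assms by (intro subring_sum) (auto simp: subringD)

lemma polyringI: "(\<And>i. coeff p i \<in> A) \<Longrightarrow> poly p x \<in> polyring A x"
  unfolding polyring_def by blast

lemma polyringE: "y \<in> polyring A x \<Longrightarrow> (\<And>p. y = poly p x \<Longrightarrow> (\<And>i. coeff p i \<in> A) \<Longrightarrow> P) \<Longrightarrow> P"
  unfolding polyring_def by blast

lemma polyring_subring:
  assumes A: "subring A" shows "subring (polyring A x)"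
proof -
  have "poly 0 x \<in> polyring A x" by (rule polyringI) (simp add: subringD[OF A])
  moreover have "poly 1 x \<in> polyring A x" by (rule polyringI) (simp add: subringD[OF A] coeff_1)
  moreover have "a + b \<in> polyring A x \<and> a - b \<in> polyring A x \<and> a * b \<in> polyring A x"
    if ha: "a \<in> polyring A x" and hb: "b \<in> polyring A x" for a b
  proof -
    obtain p where p: "a = poly p x" "\<And>i. coeff p i \<in> A" using polyringE[OF ha] by blast
    obtain q where q: "b = poly q x" "\<And>i. coeff q i \<in> A" using polyringE[OF hb] by blast
    have "poly (p + q) x \<in> polyring A x" by (rule polyringI) (simp add: p q subringD[OF A])
    moreover have "poly (p - q) x \<in> polyring A x" by (rule polyringI) (simp add: p q subringD[OF A])
    moreover have "poly (p * q) x \<in> polyring A x" by (rule polyringI) (simp add: p q coeff_mult_in[OF A])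
    ultimately show ?thesis by (simp add: p q)
  qed
  ultimately show ?thesis unfolding subring_def by simp
qed

lemma const_in_polyring: "subring A \<Longrightarrow> a \<in> A \<Longrightarrow> a \<in> polyring A x"
  unfolding polyring_def by (rule CollectI, rule exI[of _ "[:a:]"]) (auto simp: coeff_pCons subringD split: nat.split)

lemma var_in_polyring: "subring A \<Longrightarrow> x \<in> polyring A x"
  unfolding polyring_def by (rule CollectI, rule exI[of _ "monom 1 1"]) (auto simp: coeff_monom subringD poly_monom)

lemma polyring_mono: "A \<subseteq> B \<Longrightarrow> polyring A x \<subseteq> polyring B x"
  unfolding polyring_def by blast

lemma transc_unique:
  assumes L: "subring L" and t: "transc_over L x"
    and p: "\<And>i. coeff p i \<in> L" and q: "\<And>i. coeff q i \<in> L" and e: "poly p x = poly q x"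
  shows "p = q"
proof -
  have "poly (p - q) x = 0" using e by simp
  moreover have "\<forall>i. coeff (p - q) i \<in> L" using p q by (simp add: subringD[OF L])
  ultimately have "p - q = 0" using t unfolding transc_over_def by blast
  then show ?thesis by simp
qed

section \<open>Modules\<close>

lemma is_moduleD:
  assumes "is_module R N"
  shows "0 \<in> N" "a \<in> N \<Longrightarrow> b \<in> N \<Longrightarrow> a + b \<in> N" "r \<in> R \<Longrightarrow> m \<in> N \<Longrightarrow> r * m \<in> N"
  using assms unfolding is_module_def by auto

lemma module_sum: "is_module R N \<Longrightarrow> (\<And>i. i \<in> I \<Longrightarrow> f i \<in> N) \<Longrightarrow> sum f I \<in> N"
proof (induction I rule: infinite_finite_induct)
  case (infinite A) then show ?case by (simp add: is_moduleD)
next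
  case empty then show ?case by (simp add: is_moduleD)
next
  case (insert x F) then show ?case by (simp add: is_moduleD)
qed

lemma module_uminus: "is_module R N \<Longrightarrow> subring R \<Longrightarrow> a \<in> N \<Longrightarrow> - a \<in> N"
  using is_moduleD(3)[of R N "-1" a] subring_uminus[of R 1] subringD(2)[of R] by simp

lemma module_diff: "is_module R N \<Longrightarrow> subring R \<Longrightarrow> a \<in> N \<Longrightarrow> b \<in> N \<Longrightarrow> a - b \<in> N"
  using is_moduleD(2)[of R N a "-b"] module_uminus[of R N b] by simp

lemma genmod_least:
  assumes N: "is_module R N" and E: "E \<subseteq> N" shows "genmod R E \<subseteq> N"
proof
  fix y assume "y \<in> genmod R E"
  then obtain S c where y: "y = (\<Sum>s\<in>S. c s * s)" "S \<subseteq> E" "\<forall>s. c s \<in> R"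
    unfolding genmod_def by blast
  show "y \<in> N" unfolding y(1) using y E by (intro module_sum[OF N] is_moduleD(3)[OF N]) auto
qed

lemma genmod_module:
  assumes R: "subring R" shows "is_module R (genmod R E)"
  unfolding is_module_def
proof (intro conjI ballI)
  show "0 \<in> genmod R E" unfolding genmod_def
    by (rule CollectI, rule exI[of _ "{}"], rule exI[of _ "\<lambda>_. 0"]) (simp add: subringD[OF R])
next
  fix a b assume "a \<in> genmod R E" "b \<in> genmod R E"
  then obtain S1 c1 S2 c2 where a: "a = (\<Sum>s\<in>S1. c1 s * s)" "finite S1" "S1 \<subseteq> E" "\<forall>s. c1 s \<in> R"
    and b: "b = (\<Sum>s\<in>S2. c2 s * s)" "finite S2" "S2 \<subseteq> E" "\<forall>s. c2 s \<in> R"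
    unfolding genmod_def by blast
  define c where "c s = (if s \<in> S1 then c1 s else 0) + (if s \<in> S2 then c2 s else 0)" for s
  have "(\<Sum>s\<in>S1 \<union> S2. c s * s) = (\<Sum>s\<in>S1 \<union> S2. (if s \<in> S1 then c1 s * s else 0)
      + (if s \<in> S2 then c2 s * s else 0))"
    by (rule sum.cong) (auto simp: c_def distrib_right)
  also have "\<dots> = (\<Sum>s\<in>S1 \<union> S2. (if s \<in> S1 then c1 s * s else 0))
      + (\<Sum>s\<in>S1 \<union> S2. (if s \<in> S2 then c2 s * s else 0))"
    by (rule sum.distrib)
  also have "\<dots> = a + b"
    using a b by (simp add: sum.If_cases Int_absorb1 Int_absorb2)
  finally have "a + b = (\<Sum>s\<in>S1 \<union> S2. c s * s)" by simp
  moreover have "\<forall>s. c s \<in> R" unfolding c_def using a b by (simp add: subringD[OF R])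
  ultimately show "a + b \<in> genmod R E" unfolding genmod_def using a b by blast
next
  fix r a assume r: "r \<in> R" and "a \<in> genmod R E"
  then obtain S c where a: "a = (\<Sum>s\<in>S. c s * s)" "finite S" "S \<subseteq> E" "\<forall>s. c s \<in> R"
    unfolding genmod_def by blast
  have "r * a = (\<Sum>s\<in>S. (r * c s) * s)" unfolding a by (simp add: sum_distrib_left mult.assoc)
  moreover have "\<forall>s. r * c s \<in> R" using a r by (simp add: subringD[OF R])
  ultimately show "r * a \<in> genmod R E" unfolding genmod_def using a
    by (intro CollectI exI[of _ S] exI[of _ "\<lambda>s. r * c s"]) simp
qed

lemma genmod_sub:
  assumes R: "subring R" shows "E \<subseteq> genmod R E"
proof
  fix e assume "e \<in> E"
  then show "e \<in> genmod R E" unfolding genmod_def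
    by (intro CollectI exI[of _ "{e}"] exI[of _ "\<lambda>_. 1"]) (simp add: subringD[OF R])
qed

lemma genmod_mono: "E \<subseteq> F \<Longrightarrow> genmod R E \<subseteq> genmod R F"
  unfolding genmod_def by blast

lemma genmod_mono_ring: "R \<subseteq> R' \<Longrightarrow> genmod R E \<subseteq> genmod R' E"
  unfolding genmod_def by blast

lemma module_mono_ring: "is_module R N \<Longrightarrow> R' \<subseteq> R \<Longrightarrow> is_module R' N"
  unfolding is_module_def by blast

lemma genmod_idem: "subring R \<Longrightarrow> is_module R N \<Longrightarrow> genmod R N = N"
  using genmod_least[of R N N] genmod_sub[of R N] by blast



lemma prime_idealD:
  assumes "prime_ideal_of A Q"
  shows "Q \<subseteq> A" "is_module A Q" "Q \<noteq> A" "a \<in> A \<Longrightarrow> b \<in> A \<Longrightarrow> a * b \<in> Q \<Longrightarrow> a \<in> Q \<or> b \<in> Q"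
  using assms unfolding prime_ideal_of_def ideal_of_def by auto

lemma ideal_one_notin:
  assumes "ideal_of A Q" "Q \<noteq> A" "subring A" shows "1 \<notin> Q"
proof
  assume "1 \<in> Q"
  then have "a \<in> Q" if "a \<in> A" for a using is_moduleD(3)[of A Q a 1] assms that
    unfolding ideal_of_def by simp
  then show False using assms unfolding ideal_of_def by blast
qed

lemma coeff_mult_ideal:
  assumes "is_module A Q" "\<And>i. coeff p i \<in> A" "\<And>i. coeff q i \<in> Q"
  shows "coeff (p * q) n \<in> Q"
  unfolding coeff_mult using assms by (intro module_sum[OF assms(1)] is_moduleD(3)[OF assms(1)]) auto

lemma coeff_mult_ideal':
  assumes "is_module A Q" "\<And>i. coeff p i \<in> Q" "\<And>i. coeff q i \<in> A"
  shows "coeff (p * q) n \<in> Q"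
  using coeff_mult_ideal[OF assms(1) assms(3) assms(2)] by (simp add: mult.commute)

lemma const_poly_coeffs: "0 \<in> Q \<Longrightarrow> c \<in> Q \<Longrightarrow> coeff [:c:] i \<in> Q"
  by (cases i) auto

lemma gauss_prime:
  assumes A: "subring A" and Q: "prime_ideal_of A Q"
    and p: "\<And>i. coeff p i \<in> A" and q: "\<And>i. coeff q i \<in> A" and pq: "\<And>n. coeff (p * q) n \<in> Q"
  shows "(\<forall>i. coeff p i \<in> Q) \<or> (\<forall>i. coeff q i \<in> Q)"
proof (rule ccontr)
  assume "\<not> ?thesis"
  then obtain i0 j0 where "coeff p i0 \<notin> Q" "coeff q j0 \<notin> Q" by blast
  define i where "i = (LEAST i. coeff p i \<notin> Q)"
  define j where "j = (LEAST j. coeff q j \<notin> Q)"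
  have pi: "coeff p i \<notin> Q" unfolding i_def by (rule LeastI[of "\<lambda>i. coeff p i \<notin> Q" i0]) fact
  have pl: "coeff p k \<in> Q" if "k < i" for k using not_less_Least[OF that[unfolded i_def]] by blast
  have qj: "coeff q j \<notin> Q" unfolding j_def by (rule LeastI[of "\<lambda>i. coeff q i \<notin> Q" j0]) fact
  have ql: "coeff q k \<in> Q" if "k < j" for k using not_less_Least[OF that[unfolded j_def]] by blast
  have M: "is_module A Q" using prime_idealD[OF Q] by blast
  have s: "coeff (p * q) (i + j) = coeff p i * coeff q (i + j - i)
      + (\<Sum>k\<in>{..i+j} - {i}. coeff p k * coeff q (i + j - k))"
    unfolding coeff_mult by (rule sum.remove) auto
  have rest: "(\<Sum>k\<in>{..i+j} - {i}. coeff p k * coeff q (i + j - k)) \<in> Q"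
  proof (rule module_sum[OF M])
    fix k assume k: "k \<in> {..i+j} - {i}"
    show "coeff p k * coeff q (i + j - k) \<in> Q"
    proof (cases "k < i")
      case True then show ?thesis using is_moduleD(3)[OF M q pl[OF True]] by (simp add: mult.commute)
    next
      case False then have "i + j - k < j" using k by auto
      then show ?thesis using is_moduleD(3)[OF M p ql] by blast
    qed
  qed
  have "coeff p i * coeff q j \<in> Q"
    using module_diff[OF M A pq[of "i+j"] rest] s by simp
  then show False using prime_idealD(4)[OF Q p q] pi qj by blast
qed

lemma polyring_prime:
  assumes A: "subring A" and t: "transc_over (qf A) x" and Q: "prime_ideal_of A Q"
  shows "prime_ideal_of (polyring A x) (polyring Q x)"
proof -
  have QA: "Q \<subseteq> A" and M: "is_module A Q" and QnA: "Q \<noteq> A" using prime_idealD[OF Q] by auto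
  have Aq: "A \<subseteq> qf A" by (rule qf_subset[OF A])
  have L: "subring (qf A)" by (rule qf_subring[OF A])
  have sub: "polyring Q x \<subseteq> polyring A x" using QA by (rule polyring_mono)
  have mod: "is_module (polyring A x) (polyring Q x)"
    unfolding is_module_def
  proof (intro conjI ballI)
    show "0 \<in> polyring Q x" using polyringI[of 0 Q x] is_moduleD(1)[OF M] by simp
  next
    fix a b assume "a \<in> polyring Q x" "b \<in> polyring Q x"
    then obtain p q where "a = poly p x" "\<And>i. coeff p i \<in> Q" "b = poly q x" "\<And>i. coeff q i \<in> Q"
      unfolding polyring_def by blast
    then show "a + b \<in> polyring Q x" using polyringI[of "p + q" Q x] is_moduleD(2)[OF M] by simp
  next
    fix r m assume "r \<in> polyring A x" "m \<in> polyring Q x"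
    then obtain p q where "r = poly p x" "\<And>i. coeff p i \<in> A" "m = poly q x" "\<And>i. coeff q i \<in> Q"
      unfolding polyring_def by blast
    then show "r * m \<in> polyring Q x" using polyringI[of "p * q" Q x] coeff_mult_ideal[OF M] by simp
  qed
  have one: "1 \<notin> Q" using ideal_one_notin[OF _ QnA A] Q unfolding prime_ideal_of_def by blast
  have ne: "polyring Q x \<noteq> polyring A x"
  proof
    assume "polyring Q x = polyring A x"
    then have "1 \<in> polyring Q x" using polyring_subring[OF A] subringD(2) by metis
    then obtain q where q: "1 = poly q x" "\<And>i. coeff q i \<in> Q" unfolding polyring_def by blast
    have "q = 1"
      by (rule transc_unique[OF L t]) (use q QA Aq subringD(1,2)[OF L] in \<open>auto simp: coeff_1\<close>)
    then show False using q(2)[of 0] one by simp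
  qed
  have prime: "a \<in> polyring Q x \<or> b \<in> polyring Q x"
    if hab: "a \<in> polyring A x" "b \<in> polyring A x" "a * b \<in> polyring Q x" for a b
  proof -
    obtain p q where pq: "a = poly p x" "\<And>i. coeff p i \<in> A" "b = poly q x" "\<And>i. coeff q i \<in> A"
      using hab(1,2) unfolding polyring_def by blast
    obtain r where r: "a * b = poly r x" "\<And>i. coeff r i \<in> Q" using hab(3) unfolding polyring_def by blast
    have c1: "coeff (p * q) i \<in> qf A" for i using coeff_mult_in[OF A pq(2) pq(4)] Aq by blast
    have c2: "coeff r i \<in> qf A" for i using r(2) QA Aq by blast
    have "p * q = r"
      by (rule transc_unique[OF L t c1 c2]) (use pq r in simp)
    then have "(\<forall>i. coeff p i \<in> Q) \<or> (\<forall>i. coeff q i \<in> Q)"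
      using gauss_prime[OF A Q pq(2) pq(4)] r(2) by blast
    then show ?thesis using pq polyringI by metis
  qed
  show ?thesis unfolding prime_ideal_of_def ideal_of_def using sub mod ne prime by blast
qed

lemma polyring_contract:
  assumes A: "subring A" and t: "transc_over (qf A) x" and QA: "Q \<subseteq> A" and Q0: "0 \<in> Q"
  shows "polyring Q x \<inter> A = Q"
proof
  have L: "subring (qf A)" by (rule qf_subring[OF A])
  have Aq: "A \<subseteq> qf A" by (rule qf_subset[OF A])
  show "polyring Q x \<inter> A \<subseteq> Q"
  proof
    fix c assume "c \<in> polyring Q x \<inter> A"
    then obtain q where q: "c = poly q x" "\<And>i. coeff q i \<in> Q" "c \<in> A" unfolding polyring_def by blast
    have "q = [:c:]"
      by (rule transc_unique[OF L t]) (use q QA Aq subringD(1)[OF L] in \<open>auto simp: coeff_pCons split: nat.split\<close>)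
    then show "c \<in> Q" using q(2)[of 0] by simp
  qed
  show "Q \<subseteq> polyring Q x \<inter> A"
  proof
    fix c assume c: "c \<in> Q"
    have "poly [:c:] x \<in> polyring Q x" by (rule polyringI) (rule const_poly_coeffs[OF Q0 c])
    then show "c \<in> polyring Q x \<inter> A" using c QA by auto
  qed
qed

text \<open>Localization\<close>

definition locset :: "'a::field set \<Rightarrow> 'a set \<Rightarrow> 'a set" where
  "locset A T = {a / t | a t. a \<in> A \<and> t \<in> T}"

definition multclosed :: "'a::field set \<Rightarrow> 'a set \<Rightarrow> bool" where
  "multclosed A T \<longleftrightarrow> T \<subseteq> A \<and> 1 \<in> T \<and> 0 \<notin> T \<and> (\<forall>s\<in>T. \<forall>t\<in>T. s * t \<in> T)"

lemma locset_subring: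
  assumes A: "subring A" and T: "multclosed A T" shows "subring (locset A T)"
  unfolding subring_def
proof (intro conjI ballI)
  have T1: "1 \<in> T" using T unfolding multclosed_def by blast
  have "(0::'a) = 0 / 1" "(1::'a) = 1 / 1" by simp_all
  then show "0 \<in> locset A T" "1 \<in> locset A T" unfolding locset_def using T1 subringD(1,2)[OF A] by blast+
next
  fix x y assume "x \<in> locset A T" "y \<in> locset A T"
  then obtain a s b t where x: "x = a / s" "a \<in> A" "s \<in> T" and y: "y = b / t" "b \<in> A" "t \<in> T"
    unfolding locset_def by blast
  have st: "s * t \<in> T" "s \<noteq> 0" "t \<noteq> 0" using T x y unfolding multclosed_def by auto
  have sA: "s \<in> A" "t \<in> A" using T x y unfolding multclosed_def by auto
  have "x + y = (a * t + b * s) / (s * t)" using st x y by (simp add: field_simps)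
  moreover have "a * t + b * s \<in> A" using x y sA A by (simp add: subringD)
  ultimately show "x + y \<in> locset A T" unfolding locset_def using st by blast
  have "x - y = (a * t - b * s) / (s * t)" using st x y by (simp add: field_simps)
  moreover have "a * t - b * s \<in> A" using x y sA A by (simp add: subringD)
  ultimately show "x - y \<in> locset A T" unfolding locset_def using st by blast
  have "x * y = (a * b) / (s * t)" using st x y by (simp add: field_simps)
  moreover have "a * b \<in> A" using x y sA A by (simp add: subringD)
  ultimately show "x * y \<in> locset A T" unfolding locset_def using st by blast
qed

lemma locset_sub: "multclosed A T \<Longrightarrow> A \<subseteq> locset A T"
proof
  fix a assume "multclosed A T" "a \<in> A"
  then have "a = a / 1" "1 \<in> T" unfolding multclosed_def by auto
  then show "a \<in> locset A T" unfolding locset_def using \<open>a \<in> A\<close> by blast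
qed

lemma locset_inv: "multclosed A T \<Longrightarrow> subring A \<Longrightarrow> t \<in> T \<Longrightarrow> 1 / t \<in> locset A T"
  unfolding locset_def using subringD(2) by blast

lemma locmod:
  assumes A: "subring A" and T: "multclosed A T" and M: "is_module A M"
  shows "genmod (locset A T) M \<subseteq> {y. \<exists>t\<in>T. t * y \<in> M}"
proof (rule genmod_least)
  have T1: "1 \<in> T" and TA: "T \<subseteq> A" and T0: "0 \<notin> T" and Tm: "\<And>s t. s \<in> T \<Longrightarrow> t \<in> T \<Longrightarrow> s * t \<in> T"
    using T unfolding multclosed_def by auto
  show "M \<subseteq> {y. \<exists>t\<in>T. t * y \<in> M}"
  proof
    fix m assume "m \<in> M" then have "1 * m \<in> M" by simp
    then show "m \<in> {y. \<exists>t\<in>T. t * y \<in> M}" using T1 by blast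
  qed
  show "is_module (locset A T) {y. \<exists>t\<in>T. t * y \<in> M}"
    unfolding is_module_def
  proof (intro conjI ballI)
    have "1 * 0 \<in> M" using is_moduleD(1)[OF M] by simp
    then show "0 \<in> {y. \<exists>t\<in>T. t * y \<in> M}" using T1 by blast
  next
    fix x y assume "x \<in> {y. \<exists>t\<in>T. t * y \<in> M}" "y \<in> {y. \<exists>t\<in>T. t * y \<in> M}"
    then obtain s t where s: "s \<in> T" "s * x \<in> M" and t: "t \<in> T" "t * y \<in> M" by blast
    have "(s * t) * (x + y) = t * (s * x) + s * (t * y)" by (simp add: algebra_simps)
    moreover have "\<dots> \<in> M" using s t TA
      by (intro is_moduleD(2)[OF M is_moduleD(3)[OF M _ s(2)] is_moduleD(3)[OF M _ t(2)]]) auto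
    ultimately have "(s * t) * (x + y) \<in> M" by simp
    then show "x + y \<in> {y. \<exists>t\<in>T. t * y \<in> M}" using Tm[OF s(1) t(1)] by blast
  next
    fix r y assume "r \<in> locset A T" "y \<in> {y. \<exists>t\<in>T. t * y \<in> M}"
    then obtain a s t where r: "r = a / s" "a \<in> A" "s \<in> T" and t: "t \<in> T" "t * y \<in> M"
      unfolding locset_def by blast
    have "s \<noteq> 0" using T0 r by auto
    then have sr: "s * r = a" using r by simp
    have "(s * t) * (r * y) = (s * r) * (t * y)" by (simp add: algebra_simps)
    then have "(s * t) * (r * y) = a * (t * y)" using sr by simp
    moreover have "\<dots> \<in> M" by (rule is_moduleD(3)[OF M r(2) t(2)])
    ultimately have "(s * t) * (r * y) \<in> M" by (simp only:)
    then show "r * y \<in> {y. \<exists>t\<in>T. t * y \<in> M}" using Tm[OF r(3) t(1)] by blast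
  qed
qed

lemma genmod_polyring_coeffs:
  assumes A: "subring A" and M: "is_module A M"
  shows "genmod (polyring A x) M \<subseteq> {poly \<eta> x | \<eta>. \<forall>k. coeff \<eta> k \<in> M}"
proof (rule genmod_least)
  show "M \<subseteq> {poly \<eta> x | \<eta>. \<forall>k. coeff \<eta> k \<in> M}"
  proof
    fix m assume "m \<in> M"
    then show "m \<in> {poly \<eta> x | \<eta>. \<forall>k. coeff \<eta> k \<in> M}"
      using const_poly_coeffs[OF is_moduleD(1)[OF M]] by (intro CollectI exI[of _ "[:m:]"]) simp
  qed
  show "is_module (polyring A x) {poly \<eta> x | \<eta>. \<forall>k. coeff \<eta> k \<in> M}"
    unfolding is_module_def
  proof (intro conjI ballI)
    show "0 \<in> {poly \<eta> x | \<eta>. \<forall>k. coeff \<eta> k \<in> M}"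
      using is_moduleD(1)[OF M] by (intro CollectI exI[of _ 0]) simp
  next
    fix a b assume "a \<in> {poly \<eta> x | \<eta>. \<forall>k. coeff \<eta> k \<in> M}" "b \<in> {poly \<eta> x | \<eta>. \<forall>k. coeff \<eta> k \<in> M}"
    then obtain p q where "a = poly p x" "\<forall>k. coeff p k \<in> M" "b = poly q x" "\<forall>k. coeff q k \<in> M" by blast
    then show "a + b \<in> {poly \<eta> x | \<eta>. \<forall>k. coeff \<eta> k \<in> M}"
      using is_moduleD(2)[OF M] by (intro CollectI exI[of _ "p + q"]) simp
  next
    fix r b assume "r \<in> polyring A x" "b \<in> {poly \<eta> x | \<eta>. \<forall>k. coeff \<eta> k \<in> M}"
    then obtain p q where "r = poly p x" "\<And>k. coeff p k \<in> A" "b = poly q x" "\<And>k. coeff q k \<in> M"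
      unfolding polyring_def by blast
    then show "r * b \<in> {poly \<eta> x | \<eta>. \<forall>k. coeff \<eta> k \<in> M}"
      using coeff_mult_ideal[OF M] by (intro CollectI exI[of _ "p * q"]) simp
  qed
qed



lemma coeffs_vanish_degree:
  assumes "\<And>i. i \<ge> m \<Longrightarrow> coeff p i = 0"
  shows "p = 0 \<or> degree p < m"
proof (cases m)
  case 0 then have "p = 0" using assms by (intro poly_eqI) simp
  then show ?thesis by simp
next
  case (Suc k)
  have "degree p \<le> k" using assms Suc by (intro degree_le) auto
  then show ?thesis using Suc by simp
qed

lemma mccoy:
  fixes f g :: "'a::field poly"
  assumes M0: "0 \<in> M" and Madd: "\<And>a b. a \<in> M \<Longrightarrow> b \<in> M \<Longrightarrow> a + b \<in> M"
    and Mdiff: "\<And>a b. a \<in> M \<Longrightarrow> b \<in> M \<Longrightarrow> a - b \<in> M"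
    and Mmul: "\<And>j y. y \<in> M \<Longrightarrow> coeff g j * y \<in> M"
    and cancel: "\<And>y. (\<And>j. coeff g j * y \<in> M) \<Longrightarrow> y \<in> M"
  shows "(\<And>n. coeff (f * g) n \<in> M) \<Longrightarrow> coeff f i \<in> M"
proof (induction "degree f" arbitrary: f i rule: less_induct)
  case less
  have Msum: "sum h I \<in> M" if "\<And>i. i \<in> I \<Longrightarrow> h i \<in> M" for h and I :: "nat set"
    using that
  proof (induction I rule: infinite_finite_induct)
    case (infinite A) then show ?case using M0 by simp
  next
    case empty then show ?case using M0 by simp
  next
    case (insert x F) then show ?case using Madd by simp
  qed
  show ?case
  proof (cases "\<forall>j i. coeff g j * coeff f i \<in> M")
    case True then show ?thesis using cancel by blast
  next
    case False
    define J where "J = {j. \<exists>i. coeff g j * coeff f i \<notin> M}"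
    have Jsub: "J \<subseteq> {..degree g}"
    proof
      fix j assume "j \<in> J"
      then obtain i where "coeff g j * coeff f i \<notin> M" unfolding J_def by blast
      then have "coeff g j \<noteq> 0" using M0 by auto
      then show "j \<in> {..degree g}" using le_degree by auto
    qed
    have finJ: "finite J" using Jsub finite_subset by blast
    have neJ: "J \<noteq> {}" using False unfolding J_def by blast
    define j where "j = Max J"
    have jJ: "j \<in> J" unfolding j_def using finJ neJ by simp
    have above: "coeff g j' * coeff f i \<in> M" if "j' > j" for j' i
    proof (rule ccontr)
      assume "coeff g j' * coeff f i \<notin> M"
      then have "j' \<in> J" unfolding J_def by blast
      then have "j' \<le> j" unfolding j_def using finJ by simp
      then show False using that by simp
    qed
    define m where "m = degree f"
    define a where "a = coeff f m"
    have s: "coeff (f * g) (m + j) = coeff f m * coeff g (m + j - m)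
      + (\<Sum>k\<in>{..m+j} - {m}. coeff f k * coeff g (m + j - k))"
      unfolding coeff_mult by (rule sum.remove) auto
    have rest: "(\<Sum>k\<in>{..m+j} - {m}. coeff f k * coeff g (m + j - k)) \<in> M"
    proof (rule Msum)
      fix k assume k: "k \<in> {..m+j} - {m}"
      show "coeff f k * coeff g (m + j - k) \<in> M"
      proof (cases "k < m")
        case True
        then have "m + j - k > j" by simp
        from above[OF this, of k] show ?thesis by (simp add: mult.commute)
      next
        case False then have "k > m" using k by auto
        then have "coeff f k = 0" unfolding m_def using coeff_eq_0 by blast
        then show ?thesis using M0 by simp
      qed
    qed
    have "coeff f m * coeff g j = coeff (f * g) (m + j) - (\<Sum>k\<in>{..m+j} - {m}. coeff f k * coeff g (m + j - k))"
      using s by simp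
    then have agj: "coeff g j * a \<in> M"
      using Mdiff[OF less.prems[of "m + j"] rest] unfolding a_def by (simp add: mult.commute)
    define f2 where "f2 = smult (coeff g j) f - monom (coeff g j * a) m"
    have f2g: "coeff (f2 * g) n \<in> M" for n
    proof -
      have "coeff (f2 * g) n = coeff g j * coeff (f * g) n - coeff (monom (coeff g j * a) m * g) n"
        unfolding f2_def by (simp add: left_diff_distrib)
      moreover have "coeff (monom (coeff g j * a) m * g) n \<in> M"
      proof -
        have e: "coeff (monom (coeff g j * a) m * g) n = (if n < m then 0 else (coeff g j * a) * coeff g (n - m))"
          by (rule coeff_monom_mult)
        have "coeff g (n - m) * (coeff g j * a) \<in> M" by (rule Mmul[OF agj])
        then show ?thesis unfolding e using M0 by (simp add: mult.commute[of "coeff g j * a"])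
      qed
      ultimately show ?thesis using Mdiff Mmul less.prems by simp
    qed
    have vanish: "coeff f2 i = 0" if "i \<ge> m" for i
    proof (cases "i = m")
      case True then show ?thesis unfolding f2_def a_def by simp
    next
      case False then have "i > m" using that by simp
      then have "coeff f i = 0" unfolding m_def using coeff_eq_0 by blast
      then show ?thesis unfolding f2_def using \<open>i > m\<close> by (simp add: coeff_monom)
    qed
    have all2: "coeff f2 i \<in> M" for i
    proof (cases "f2 = 0")
      case True then show ?thesis using M0 by simp
    next
      case False
      then have "degree f2 < degree f" using coeffs_vanish_degree[OF vanish] unfolding m_def by blast
      then show ?thesis using less.hyps f2g by blast
    qed
    have "coeff g j * coeff f i \<in> M" for i
    proof (cases "i = m")
      case True then show ?thesis using agj unfolding a_def by simp
    next
      case False then show ?thesis using all2[of i] unfolding f2_def by (simp add: coeff_monom)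
    qed
    then show ?thesis using jJ unfolding J_def by blast
  qed
qed

lemma pdiv_exists:
  assumes A: "subring A" and g: "\<And>i. coeff g i \<in> A" and g0: "g \<noteq> 0"
  shows "(\<And>i. coeff f i \<in> A) \<Longrightarrow> \<exists>k q r. smult (lead_coeff g ^ k) f = q * g + r \<and> (r = 0 \<or> degree r < degree g)
      \<and> (\<forall>i. coeff q i \<in> A) \<and> (\<forall>i. coeff r i \<in> A)"
proof (induction "degree f" arbitrary: f rule: less_induct)
  case less
  show ?case
  proof (cases "f = 0 \<or> degree f < degree g")
    case True
    show ?thesis
      by (rule exI[of _ 0], rule exI[of _ 0], rule exI[of _ f]) (use True less.prems subringD(1)[OF A] in auto)
  next
    case False
    then have f0: "f \<noteq> 0" and dg: "degree g \<le> degree f" by auto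
    define c where "c = lead_coeff g"
    define n where "n = degree f - degree g"
    define b where "b = lead_coeff f"
    define f' where "f' = smult c f - monom b n * g"
    have cA: "c \<in> A" "b \<in> A" unfolding c_def b_def using g less.prems by auto
    have monA: "coeff (monom b n) i \<in> A" for i using cA subringD(1)[OF A] by (simp add: coeff_monom)
    have f'A: "coeff f' i \<in> A" for i
      unfolding f'_def using subringD[OF A] less.prems cA coeff_mult_in[OF A monA g] by simp
    have vanish: "coeff f' i = 0" if "i \<ge> degree f" for i
    proof (cases "i = degree f")
      case True
      then have "i - n = degree g" "\<not> i < n" unfolding n_def using dg by auto
      then have "coeff (monom b n * g) i = b * c" unfolding c_def using True by (simp add: coeff_monom_mult)
      then show ?thesis unfolding f'_def c_def b_def using True by (simp add: mult.commute)
    next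
      case False then have i: "i > degree f" using that by simp
      then have "i - n > degree g" unfolding n_def using dg by auto
      then have "coeff g (i - n) = 0" using coeff_eq_0 by blast
      moreover have "coeff f i = 0" using i coeff_eq_0 by blast
      ultimately show ?thesis unfolding f'_def by (simp add: coeff_monom_mult)
    qed
    have eq: "smult c f = monom b n * g + f'" unfolding f'_def by simp
    show ?thesis
    proof (cases "f' = 0")
      case True
      show ?thesis
        by (rule exI[of _ 1], rule exI[of _ "monom b n"], rule exI[of _ 0])
           (use True eq monA subringD(1)[OF A] in \<open>simp add: c_def\<close>)
    next
      case False
      then have "degree f' < degree f" using coeffs_vanish_degree[OF vanish] by blast
      from less.hyps[OF this f'A] obtain k q r where
        kqr: "smult (lead_coeff g ^ k) f' = q * g + r" "r = 0 \<or> degree r < degree g"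
          "\<forall>i. coeff q i \<in> A" "\<forall>i. coeff r i \<in> A" by blast
      have "smult (c ^ Suc k) f = smult (c ^ k) (smult c f)" by (simp add: mult.commute)
      also have "\<dots> = (smult (c ^ k) (monom b n) + q) * g + r"
        unfolding eq using kqr(1) unfolding c_def by (simp add: smult_add_right algebra_simps)
      finally have "smult (lead_coeff g ^ Suc k) f = (smult (c ^ k) (monom b n) + q) * g + r"
        unfolding c_def .
      moreover have "\<forall>i. coeff (smult (c ^ k) (monom b n) + q) i \<in> A"
        using kqr(3) monA subring_power[OF A cA(1)] subringD[OF A] by simp
      ultimately show ?thesis using kqr by blast
    qed
  qed
qed



section \<open>Semistar facts\<close>

lemma semistarD:
  assumes "semistar D st"
  shows "E \<in> Fbar D \<Longrightarrow> st E \<in> Fbar D"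
    "x \<in> qf D \<Longrightarrow> E \<in> Fbar D \<Longrightarrow> x \<noteq> 0 \<Longrightarrow> st ((\<lambda>e. x * e) ` E) = (\<lambda>e. x * e) ` st E"
    "E \<in> Fbar D \<Longrightarrow> F \<in> Fbar D \<Longrightarrow> E \<subseteq> F \<Longrightarrow> st E \<subseteq> st F"
    "E \<in> Fbar D \<Longrightarrow> E \<subseteq> st E"
    "E \<in> Fbar D \<Longrightarrow> st (st E) = st E"
proof -
  note h = assms[unfolded semistar_def]
  show "E \<in> Fbar D \<Longrightarrow> st E \<in> Fbar D" using conjunct1[OF h] by (rule bspec)
  show "x \<in> qf D \<Longrightarrow> E \<in> Fbar D \<Longrightarrow> x \<noteq> 0 \<Longrightarrow> st ((\<lambda>e. x * e) ` E) = (\<lambda>e. x * e) ` st E"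
    using conjunct1[OF conjunct2[OF h]] by simp
  show "E \<in> Fbar D \<Longrightarrow> F \<in> Fbar D \<Longrightarrow> E \<subseteq> F \<Longrightarrow> st E \<subseteq> st F"
    using conjunct1[OF conjunct2[OF conjunct2[OF h]]] by simp
  show "E \<in> Fbar D \<Longrightarrow> E \<subseteq> st E"
    using conjunct1[OF conjunct2[OF conjunct2[OF conjunct2[OF h]]]] by simp
  show "E \<in> Fbar D \<Longrightarrow> st (st E) = st E"
    using conjunct2[OF conjunct2[OF conjunct2[OF conjunct2[OF h]]]] by simp
qed

lemma FbarD: "E \<in> Fbar D \<Longrightarrow> E \<subseteq> qf D" "E \<in> Fbar D \<Longrightarrow> is_module D E" "E \<in> Fbar D \<Longrightarrow> E \<noteq> {0}"
  unfolding Fbar_def by auto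

lemma module_self: "subring A \<Longrightarrow> is_module A A"
  unfolding is_module_def by (auto simp: subringD)

lemma module_qf: "subring A \<Longrightarrow> is_module A (qf A)"
  using qf_subset[of A] qf_subring[of A] unfolding is_module_def by (auto simp: subringD)

lemma D_Fbar: "subring D \<Longrightarrow> D \<in> Fbar D"
  unfolding Fbar_def using qf_subset[of D] module_self[of D] subringD(2)[of D] by auto

lemma genmod_sub_D:
  assumes D: "subring D" and "S \<subseteq> D" shows "genmod D S \<subseteq> D"
  using genmod_least[OF module_self[OF D]] assms by blast

lemma genmod_Fbar:
  assumes D: "subring D" and S: "S \<subseteq> D" and s: "s \<in> S" "s \<noteq> 0"
  shows "genmod D S \<in> Fbar D"
proof -
  have "genmod D S \<subseteq> qf D" using genmod_sub_D[OF D S] qf_subset[OF D] by blast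
  moreover have "genmod D S \<noteq> {0}" using genmod_sub[OF D, of S] s by blast
  ultimately show ?thesis unfolding Fbar_def using genmod_module[OF D] by blast
qed

lemma genmod_fg:
  assumes D: "subring D" and fin: "finite S" and S: "S \<subseteq> D" and s: "s \<in> S" "s \<noteq> 0"
  shows "fg_frac D (genmod D S)"
proof -
  have "(\<lambda>f. 1 * f) ` genmod D S \<subseteq> D" using genmod_sub_D[OF D S] by simp
  moreover have "S \<subseteq> qf D" using S qf_subset[OF D] by blast
  ultimately show ?thesis unfolding fg_frac_def using genmod_Fbar[OF D S s] fin subringD(2)[OF D]
    by (intro conjI) (auto intro!: exI[of _ S] bexI[of _ 1])
qed

lemma genmod_zero_set:
  assumes "\<forall>s\<in>S. s = 0" shows "genmod R S \<subseteq> {0}"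
proof
  fix y assume "y \<in> genmod R S"
  then obtain T c where y: "y = (\<Sum>s\<in>T. c s * s)" "T \<subseteq> S" unfolding genmod_def by blast
  have "y = 0" unfolding y(1) using y(2) assms by (intro sum.neutral) auto
  then show "y \<in> {0}" by simp
qed

lemma star_f_char:
  assumes D: "subring D" and I: "I \<subseteq> D" "is_module D I"
  shows "x \<in> star_f D st I \<longleftrightarrow> (\<exists>S. finite S \<and> S \<subseteq> I \<and> (\<exists>s\<in>S. s \<noteq> 0) \<and> x \<in> st (genmod D S))"
proof
  assume "x \<in> star_f D st I"
  then obtain F where F: "F \<subseteq> I" "fg_frac D F" "x \<in> st F" unfolding star_f_def by blast
  then obtain S where S: "finite S" "S \<subseteq> qf D" "F = genmod D S" "F \<noteq> {0}"
    unfolding fg_frac_def Fbar_def by blast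
  have "S \<subseteq> I" using genmod_sub[OF D, of S] S F by blast
  moreover have "\<exists>s\<in>S. s \<noteq> 0"
  proof (rule ccontr)
    assume "\<not> ?thesis"
    then have "F \<subseteq> {0}" using genmod_zero_set[of S D] S by auto
    moreover have "0 \<in> F" using genmod_module[OF D, of S] S is_moduleD(1) by blast
    ultimately show False using S by blast
  qed
  ultimately show "\<exists>S. finite S \<and> S \<subseteq> I \<and> (\<exists>s\<in>S. s \<noteq> 0) \<and> x \<in> st (genmod D S)"
    using S F by blast
next
  assume "\<exists>S. finite S \<and> S \<subseteq> I \<and> (\<exists>s\<in>S. s \<noteq> 0) \<and> x \<in> st (genmod D S)"
  then obtain S s where S: "finite S" "S \<subseteq> I" "s \<in> S" "s \<noteq> 0" "x \<in> st (genmod D S)" by blast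
  have "fg_frac D (genmod D S)" using genmod_fg[OF D S(1) _ S(3,4)] S(2) I by blast
  moreover have "genmod D S \<subseteq> I" using genmod_least[OF I(2) S(2)] .
  ultimately show "x \<in> star_f D st I" unfolding star_f_def using S(5) by blast
qed

lemma star_f_mono: "I \<subseteq> J \<Longrightarrow> star_f D st I \<subseteq> star_f D st J"
  unfolding star_f_def by blast

lemma st_genmod_mono:
  assumes D: "subring D" and st: "semistar D st" and T: "T \<subseteq> D" "S \<subseteq> T" "s \<in> S" "s \<noteq> 0"
  shows "st (genmod D S) \<subseteq> st (genmod D T)"
proof -
  have "genmod D S \<in> Fbar D" using genmod_Fbar[OF D _ T(3,4)] T by blast
  moreover have "genmod D T \<in> Fbar D" using genmod_Fbar[OF D T(1), of s] T by blast
  ultimately show ?thesis using semistarD(3)[OF st] genmod_mono[OF T(2)] by blast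
qed

lemma ideal_sub_star_f:
  assumes D: "subring D" and st: "semistar D st" and I: "I \<subseteq> D" "is_module D I" "I \<noteq> {0}"
  shows "I \<subseteq> star_f D st I"
proof
  fix x assume x: "x \<in> I"
  obtain q where q: "q \<in> I" "q \<noteq> 0" using I(3) is_moduleD(1)[OF I(2)] by blast
  have F: "genmod D {x, q} \<in> Fbar D" using genmod_Fbar[OF D, of "{x,q}" q] q I x by blast
  have "x \<in> st (genmod D {x, q})" using semistarD(4)[OF st F] genmod_sub[OF D, of "{x,q}"] by blast
  then show "x \<in> star_f D st I" unfolding star_f_char[OF D I(1,2)] using x q by (intro exI[of _ "{x,q}"]) auto
qed

lemma one_in_st_imp:
  assumes D: "subring D" and st: "semistar D st" and G: "G \<in> Fbar D" and one: "1 \<in> st G"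
  shows "st D \<subseteq> st G"
proof -
  have "D \<subseteq> st G"
  proof
    fix d assume "d \<in> D" then show "d \<in> st G"
      using is_moduleD(3)[OF FbarD(2)[OF semistarD(1)[OF st G]] _ one] by simp
  qed
  then have "st D \<subseteq> st (st G)" using semistarD(3)[OF st D_Fbar[OF D] semistarD(1)[OF st G]] by blast
  then show ?thesis using semistarD(5)[OF st G] by simp
qed

section \<open>Quasi-ideals and QMax\<close>

lemma quasiD:
  assumes "quasi_star_ideal D sf I"
  shows "I \<subseteq> D" "is_module D I" "I \<noteq> {0}" "sf I \<inter> D = I"
  using assms unfolding quasi_star_ideal_def ideal_of_def by auto

lemma QMaxD:
  assumes "P \<in> QMax D sf"
  shows "P \<subseteq> D" "is_module D P" "P \<noteq> {0}" "sf P \<inter> D = P" "P \<noteq> D"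
    "\<And>Q. quasi_star_ideal D sf Q \<Longrightarrow> Q \<noteq> D \<Longrightarrow> P \<subseteq> Q \<Longrightarrow> Q = P"
  using assms unfolding QMax_def quasi_star_ideal_def ideal_of_def by auto

lemma ideal_one_notin':
  assumes "subring D" "I \<subseteq> D" "is_module D I" "I \<noteq> D" shows "1 \<notin> I"
  using ideal_one_notin[of D I] assms unfolding ideal_of_def by blast

lemma image_scale_Fbar:
  assumes D: "subring D" and G: "G \<in> Fbar D" and a: "a \<in> qf D" "a \<noteq> 0"
  shows "(\<lambda>e. a * e) ` G \<in> Fbar D"
proof -
  have L: "subring (qf D)" using qf_subring[OF D] .
  have M: "is_module D G" using FbarD(2)[OF G] .
  have "(\<lambda>e. a * e) ` G \<subseteq> qf D" using FbarD(1)[OF G] a subringD(5)[OF L] by blast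
  moreover have "is_module D ((\<lambda>e. a * e) ` G)"
    unfolding is_module_def
  proof (intro conjI ballI)
    show "0 \<in> (\<lambda>e. a * e) ` G" using is_moduleD(1)[OF M] by (intro image_eqI[of _ _ 0]) auto
  next
    fix x y assume "x \<in> (\<lambda>e. a * e) ` G" "y \<in> (\<lambda>e. a * e) ` G"
    then obtain u v where "x = a * u" "y = a * v" "u \<in> G" "v \<in> G" by blast
    then show "x + y \<in> (\<lambda>e. a * e) ` G" using is_moduleD(2)[OF M]
      by (intro image_eqI[of _ _ "u + v"]) (auto simp: distrib_left)
  next
    fix r x assume "r \<in> D" "x \<in> (\<lambda>e. a * e) ` G"
    then obtain u where u: "x = a * u" "u \<in> G" by blast
    have "r * u \<in> G" using is_moduleD(3)[OF M \<open>r \<in> D\<close> u(2)] .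
    moreover have "r * x = a * (r * u)" using u by (simp add: algebra_simps)
    ultimately show "r * x \<in> (\<lambda>e. a * e) ` G" by blast
  qed
  moreover have "(\<lambda>e. a * e) ` G \<noteq> {0}"
  proof
    assume h: "(\<lambda>e. a * e) ` G = {0}"
    obtain g where g: "g \<in> G" "g \<noteq> 0" using FbarD(3)[OF G] is_moduleD(1)[OF M] by blast
    have "a * g \<in> (\<lambda>e. a * e) ` G" using g(1) by (rule imageI)
    then have "a * g = 0" using h by simp
    then show False using g a by simp
  qed
  ultimately show ?thesis unfolding Fbar_def by blast
qed

lemma scale_genmod_sub:
  assumes D: "subring D"
  shows "(\<lambda>e. a * e) ` genmod D S \<subseteq> genmod D ((\<lambda>e. a * e) ` S)"
proof -
  let ?G = "genmod D ((\<lambda>e. a * e) ` S)"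
  have M: "is_module D ?G" using genmod_module[OF D] .
  have "genmod D S \<subseteq> {y. a * y \<in> ?G}"
  proof (rule genmod_least)
    show "S \<subseteq> {y. a * y \<in> ?G}" using genmod_sub[OF D] by blast
    show "is_module D {y. a * y \<in> ?G}"
      unfolding is_module_def
      using is_moduleD[OF M] by (auto simp: distrib_left mult.left_commute)
  qed
  then show ?thesis by blast
qed

lemma QMax_prime:
  assumes D: "subring D" and st: "semistar D st" and P: "P \<in> QMax D (star_f D st)"
  shows "prime_ideal_of D P"
proof -
  note PD = QMaxD[OF P]
  have prime: "a \<in> P \<or> b \<in> P" if ab: "a \<in> D" "b \<in> D" "a * b \<in> P" for a b
  proof (rule ccontr)
    assume nab: "\<not> (a \<in> P \<or> b \<in> P)"
    have a0: "a \<noteq> 0" using nab is_moduleD(1)[OF PD(2)] by auto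
    define Q where "Q = {x \<in> D. x * a \<in> P}"
    have QD: "Q \<subseteq> D" unfolding Q_def by blast
    have QM: "is_module D Q" unfolding is_module_def
    proof (intro conjI ballI)
      show "0 \<in> Q" unfolding Q_def using is_moduleD(1)[OF PD(2)] subringD(1)[OF D] by simp
    next
      fix x y assume "x \<in> Q" "y \<in> Q"
      then have "x \<in> D" "y \<in> D" "x * a \<in> P" "y * a \<in> P" unfolding Q_def by auto
      then show "x + y \<in> Q" unfolding Q_def using is_moduleD(2)[OF PD(2)] subringD(3)[OF D]
        by (simp add: distrib_right)
    next
      fix r x assume "r \<in> D" "x \<in> Q"
      then have "x \<in> D" "x * a \<in> P" unfolding Q_def by auto
      then show "r * x \<in> Q" unfolding Q_def using is_moduleD(3)[OF PD(2) \<open>r \<in> D\<close>] subringD(5)[OF D \<open>r \<in> D\<close>]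
        by (simp add: mult.assoc)
    qed
    have PQ: "P \<subseteq> Q"
    proof
      fix x assume x: "x \<in> P"
      then have "a * x \<in> P" by (rule is_moduleD(3)[OF PD(2) ab(1)])
      then show "x \<in> Q" unfolding Q_def using x PD(1) by (auto simp: mult.commute)
    qed
    have Q0: "Q \<noteq> {0}" using PQ PD(3) is_moduleD(1)[OF PD(2)] by blast
    have bQ: "b \<in> Q" unfolding Q_def using ab by (simp add: mult.commute)
    have QnD: "Q \<noteq> D"
    proof
      assume "Q = D" then have "1 \<in> Q" using subringD(2)[OF D] by simp
      then show False using nab unfolding Q_def by simp
    qed
    have quasi: "star_f D st Q \<inter> D = Q"
    proof
      show "Q \<subseteq> star_f D st Q \<inter> D" using ideal_sub_star_f[OF D st QD QM Q0] QD by blast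
    next
      show "star_f D st Q \<inter> D \<subseteq> Q"
      proof
        fix x assume x: "x \<in> star_f D st Q \<inter> D"
        then have "x \<in> star_f D st Q" by (rule IntD1)
        then have "\<exists>S. finite S \<and> S \<subseteq> Q \<and> (\<exists>s\<in>S. s \<noteq> 0) \<and> x \<in> st (genmod D S)"
          by (rule star_f_char[OF D QD QM, THEN iffD1])
        then obtain S s where S: "finite S" "S \<subseteq> Q" "s \<in> S" "s \<noteq> 0" "x \<in> st (genmod D S)"
          by blast
        define G where "G = genmod D S"
        have G: "G \<in> Fbar D" unfolding G_def using genmod_Fbar[OF D _ S(3,4)] S(2) QD by blast
        have aq: "a \<in> qf D" using ab qf_subset[OF D] by blast
        have "a * x \<in> (\<lambda>e. a * e) ` st G" using S(5) unfolding G_def by (rule imageI)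
        then have ax: "a * x \<in> st ((\<lambda>e. a * e) ` G)" using semistarD(2)[OF st aq G a0] by simp
        define S' where "S' = (\<lambda>e. a * e) ` S"
        have S'P: "S' \<subseteq> P"
        proof
          fix y assume "y \<in> S'"
          then obtain z where "y = a * z" "z \<in> Q" unfolding S'_def using S(2) by blast
          then show "y \<in> P" unfolding Q_def by (simp add: mult.commute)
        qed
        have as: "a * s \<in> S'" "a * s \<noteq> 0" unfolding S'_def using S(3,4) a0 by auto
        have G': "genmod D S' \<in> Fbar D" using genmod_Fbar[OF D _ as] S'P PD(1) by blast
        have "st ((\<lambda>e. a * e) ` G) \<subseteq> st (genmod D S')"
          by (rule semistarD(3)[OF st image_scale_Fbar[OF D G aq a0] G'])
            (unfold G_def S'_def, rule scale_genmod_sub[OF D])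
        then have "a * x \<in> st (genmod D S')" using ax by blast
        moreover have "finite S'" unfolding S'_def using S(1) by simp
        ultimately have "a * x \<in> star_f D st P"
          using S'P as by (intro star_f_char[OF D PD(1,2), THEN iffD2]) blast
        moreover have "a * x \<in> D" using x ab subringD(5)[OF D] by blast
        ultimately have "a * x \<in> P" using PD(4) by blast
        then show "x \<in> Q" unfolding Q_def using x by (simp add: mult.commute)
      qed
    qed
    have "quasi_star_ideal D (star_f D st) Q"
      unfolding quasi_star_ideal_def ideal_of_def using QD QM Q0 quasi by blast
    then have "Q = P" using PD(6) QnD PQ by blast
    then show False using bQ nab by blast
  qed
  show ?thesis unfolding prime_ideal_of_def ideal_of_def using PD(1,2,5) prime by blast
qed



lemma exists_QMax:
  assumes D: "subring D" and st: "semistar D st"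
    and I: "I \<subseteq> D" "is_module D I" "I \<noteq> {0}"
    and noone: "\<And>S s. finite S \<Longrightarrow> S \<subseteq> I \<Longrightarrow> s \<in> S \<Longrightarrow> s \<noteq> 0 \<Longrightarrow> 1 \<notin> st (genmod D S)"
  shows "\<exists>P \<in> QMax D (star_f D st). I \<subseteq> P"
proof -
  let ?sf = "star_f D st"
  define I' where "I' = ?sf I \<inter> D"
  have I'D: "I' \<subseteq> D" unfolding I'_def by blast
  have II': "I \<subseteq> I'" unfolding I'_def using ideal_sub_star_f[OF D st I] I(1) by blast
  have charI: "x \<in> ?sf I \<longleftrightarrow> (\<exists>S. finite S \<and> S \<subseteq> I \<and> (\<exists>s\<in>S. s \<noteq> 0) \<and> x \<in> st (genmod D S))" for x
    by (rule star_f_char[OF D I(1,2)])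
  have I'M: "is_module D I'"
    unfolding is_module_def
  proof (intro conjI ballI)
    show "0 \<in> I'" using II' is_moduleD(1)[OF I(2)] by blast
  next
    fix x y assume x: "x \<in> I'" and y: "y \<in> I'"
    have "x \<in> ?sf I" using x unfolding I'_def by (rule IntD1)
    then have "\<exists>S. finite S \<and> S \<subseteq> I \<and> (\<exists>s\<in>S. s \<noteq> 0) \<and> x \<in> st (genmod D S)"
      by (rule charI[THEN iffD1])
    then obtain Sx sx where Sx: "finite Sx" "Sx \<subseteq> I" "sx \<in> Sx" "sx \<noteq> 0" "x \<in> st (genmod D Sx)" by blast
    have "y \<in> ?sf I" using y unfolding I'_def by (rule IntD1)
    then have "\<exists>S. finite S \<and> S \<subseteq> I \<and> (\<exists>s\<in>S. s \<noteq> 0) \<and> y \<in> st (genmod D S)"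
      by (rule charI[THEN iffD1])
    then obtain Sy sy where Sy: "finite Sy" "Sy \<subseteq> I" "sy \<in> Sy" "sy \<noteq> 0" "y \<in> st (genmod D Sy)" by blast
    let ?T = "Sx \<union> Sy"
    have T: "?T \<subseteq> D" using Sx Sy I(1) by blast
    have "st (genmod D Sx) \<subseteq> st (genmod D ?T)" by (rule st_genmod_mono[OF D st T _ Sx(3,4)]) blast
    moreover have "st (genmod D Sy) \<subseteq> st (genmod D ?T)" by (rule st_genmod_mono[OF D st T _ Sy(3,4)]) blast
    moreover have F: "genmod D ?T \<in> Fbar D" using genmod_Fbar[OF D T, of sx] Sx by blast
    ultimately have "x + y \<in> st (genmod D ?T)"
      using is_moduleD(2)[OF FbarD(2)[OF semistarD(1)[OF st F]]] Sx(5) Sy(5) by blast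
    then have "x + y \<in> ?sf I" using Sx Sy by (intro charI[THEN iffD2]) blast
    moreover have "x + y \<in> D" using x y I'D subringD(3)[OF D] by blast
    ultimately show "x + y \<in> I'" unfolding I'_def by blast
  next
    fix r x assume r: "r \<in> D" and x: "x \<in> I'"
    have "x \<in> ?sf I" using x unfolding I'_def by (rule IntD1)
    then have "\<exists>S. finite S \<and> S \<subseteq> I \<and> (\<exists>s\<in>S. s \<noteq> 0) \<and> x \<in> st (genmod D S)"
      by (rule charI[THEN iffD1])
    then obtain Sx sx where Sx: "finite Sx" "Sx \<subseteq> I" "sx \<in> Sx" "sx \<noteq> 0" "x \<in> st (genmod D Sx)" by blast
    have F: "genmod D Sx \<in> Fbar D" using genmod_Fbar[OF D _ Sx(3,4)] Sx(2) I(1) by blast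
    have "r * x \<in> st (genmod D Sx)" using is_moduleD(3)[OF FbarD(2)[OF semistarD(1)[OF st F]] r Sx(5)] .
    then have "r * x \<in> ?sf I" using Sx by (intro charI[THEN iffD2]) blast
    moreover have "r * x \<in> D" using x r I'D subringD(5)[OF D] by blast
    ultimately show "r * x \<in> I'" unfolding I'_def by blast
  qed
  have I'0: "I' \<noteq> {0}" using II' I(3) is_moduleD(1)[OF I(2)] by blast
  have one: "1 \<notin> I'"
  proof
    assume "1 \<in> I'"
    then have "1 \<in> ?sf I" unfolding I'_def by (rule IntD1)
    then have "\<exists>S. finite S \<and> S \<subseteq> I \<and> (\<exists>s\<in>S. s \<noteq> 0) \<and> 1 \<in> st (genmod D S)"
      by (rule charI[THEN iffD1])
    then show False using noone by blast
  qed
  have charI': "x \<in> ?sf I' \<longleftrightarrow> (\<exists>S. finite S \<and> S \<subseteq> I' \<and> (\<exists>s\<in>S. s \<noteq> 0) \<and> x \<in> st (genmod D S))" for x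
    by (rule star_f_char[OF D I'D I'M])
  have I'q: "?sf I' \<inter> D = I'"
  proof
    show "I' \<subseteq> ?sf I' \<inter> D" using ideal_sub_star_f[OF D st I'D I'M I'0] I'D by blast
  next
    show "?sf I' \<inter> D \<subseteq> I'"
    proof
      fix x assume x: "x \<in> ?sf I' \<inter> D"
      then have "x \<in> ?sf I'" by (rule IntD1)
      then have "\<exists>S. finite S \<and> S \<subseteq> I' \<and> (\<exists>s\<in>S. s \<noteq> 0) \<and> x \<in> st (genmod D S)"
        by (rule charI'[THEN iffD1])
      then obtain S s0 where S: "finite S" "S \<subseteq> I'" "s0 \<in> S" "s0 \<noteq> 0" "x \<in> st (genmod D S)" by blast
      have "\<forall>s\<in>S. \<exists>T. finite T \<and> T \<subseteq> I \<and> (\<exists>t\<in>T. t \<noteq> 0) \<and> s \<in> st (genmod D T)"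
      proof
        fix s assume "s \<in> S"
        then have "s \<in> ?sf I" using S(2) unfolding I'_def by blast
        then show "\<exists>T. finite T \<and> T \<subseteq> I \<and> (\<exists>t\<in>T. t \<noteq> 0) \<and> s \<in> st (genmod D T)"
          by (rule charI[THEN iffD1])
      qed
      from bchoice[OF this] obtain Tf where Tf0: "\<forall>s\<in>S. finite (Tf s) \<and> Tf s \<subseteq> I \<and> (\<exists>t\<in>Tf s. t \<noteq> 0) \<and> s \<in> st (genmod D (Tf s))"
        by blast
      have Tf: "finite (Tf s) \<and> Tf s \<subseteq> I \<and> (\<exists>t\<in>Tf s. t \<noteq> 0) \<and> s \<in> st (genmod D (Tf s))" if "s \<in> S" for s
        using Tf0 that by (rule bspec)
      define T where "T = \<Union> (Tf ` S)"
      have Tfin: "finite T" unfolding T_def using S(1) Tf by (intro finite_UN_I) auto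
      have TI: "T \<subseteq> I" unfolding T_def using Tf by blast
      obtain t0 where t0: "t0 \<in> Tf s0" "t0 \<noteq> 0" using Tf[OF S(3)] by blast
      have t0T: "t0 \<in> T" unfolding T_def using t0 S(3) by blast
      have TD: "T \<subseteq> D" using TI I(1) by blast
      have FT: "genmod D T \<in> Fbar D" using genmod_Fbar[OF D TD t0T t0(2)] .
      have SsT: "S \<subseteq> st (genmod D T)"
      proof
        fix s assume s: "s \<in> S"
        obtain t where t: "t \<in> Tf s" "t \<noteq> 0" using Tf[OF s] by blast
        have "st (genmod D (Tf s)) \<subseteq> st (genmod D T)"
          by (rule st_genmod_mono[OF D st TD _ t]) (use s in \<open>auto simp: T_def\<close>)
        then show "s \<in> st (genmod D T)" using Tf[OF s] by blast
      qed
      have FS: "genmod D S \<in> Fbar D" using genmod_Fbar[OF D _ S(3,4)] S(2) I'D by blast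
      have "genmod D S \<subseteq> st (genmod D T)"
        by (rule genmod_least[OF FbarD(2)[OF semistarD(1)[OF st FT]] SsT])
      then have "st (genmod D S) \<subseteq> st (st (genmod D T))"
        using semistarD(3)[OF st FS semistarD(1)[OF st FT]] by blast
      then have "x \<in> st (genmod D T)" using S(5) semistarD(5)[OF st FT] by blast
      then have "x \<in> ?sf I" using Tfin TI t0T t0(2) by (intro charI[THEN iffD2]) blast
      then show "x \<in> I'" unfolding I'_def using x by blast
    qed
  qed
  define \<A> where "\<A> = {Q. quasi_star_ideal D ?sf Q \<and> Q \<noteq> D \<and> I \<subseteq> Q}"
  have "I' \<in> \<A>" unfolding \<A>_def quasi_star_ideal_def ideal_of_def
    using I'D I'M I'0 I'q II' one subringD(2)[OF D] by blast
  then have ne: "\<A> \<noteq> {}" by blast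
  have chain: "\<Union>\<C> \<in> \<A>" if C: "\<C> \<noteq> {}" "subset.chain \<A> \<C>" for \<C>
  proof -
    have CA: "\<C> \<subseteq> \<A>" and comp: "\<And>X Y. X \<in> \<C> \<Longrightarrow> Y \<in> \<C> \<Longrightarrow> X \<subseteq> Y \<or> Y \<subseteq> X"
      using C(2) unfolding subset_chain_def by auto
    have mem: "Q \<subseteq> D" "is_module D Q" "I \<subseteq> Q" "Q \<noteq> D" "?sf Q \<inter> D = Q" if "Q \<in> \<C>" for Q
      using CA that unfolding \<A>_def quasi_star_ideal_def ideal_of_def by auto
    obtain Q0 where Q0: "Q0 \<in> \<C>" using C(1) by blast
    let ?U = "\<Union>\<C>"
    have UD: "?U \<subseteq> D" using mem(1) by blast
    have IU: "I \<subseteq> ?U" using mem(3)[OF Q0] Q0 by blast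
    have UM: "is_module D ?U"
      unfolding is_module_def
    proof (intro conjI ballI)
      show "0 \<in> ?U" using is_moduleD(1)[OF mem(2)[OF Q0]] Q0 by blast
    next
      fix x y assume "x \<in> ?U" "y \<in> ?U"
      then obtain X Y where XY: "X \<in> \<C>" "Y \<in> \<C>" "x \<in> X" "y \<in> Y" by blast
      show "x + y \<in> ?U"
      proof (cases "X \<subseteq> Y")
        case True then show ?thesis using is_moduleD(2)[OF mem(2)[OF XY(2)]] XY by blast
      next
        case False then have "Y \<subseteq> X" using comp[OF XY(1,2)] by blast
        then show ?thesis using is_moduleD(2)[OF mem(2)[OF XY(1)]] XY by blast
      qed
    next
      fix r x assume r: "r \<in> D" and "x \<in> ?U"
      then obtain X where X: "X \<in> \<C>" "x \<in> X" by blast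
      then show "r * x \<in> ?U" using is_moduleD(3)[OF mem(2)[OF X(1)] r] by blast
    qed
    have U0: "?U \<noteq> {0}" using IU I(3) is_moduleD(1)[OF I(2)] by blast
    have U1: "?U \<noteq> D"
    proof
      assume "?U = D"
      then obtain X where "X \<in> \<C>" "1 \<in> X" using subringD(2)[OF D] by blast
      then show False using ideal_one_notin'[OF D mem(1,2,4)] by blast
    qed
    have Uq: "?sf ?U \<inter> D = ?U"
    proof
      show "?U \<subseteq> ?sf ?U \<inter> D" using ideal_sub_star_f[OF D st UD UM U0] UD by blast
    next
      show "?sf ?U \<inter> D \<subseteq> ?U"
      proof
        fix x assume x: "x \<in> ?sf ?U \<inter> D"
        then have "x \<in> ?sf ?U" by (rule IntD1)
        then have "\<exists>S. finite S \<and> S \<subseteq> ?U \<and> (\<exists>s\<in>S. s \<noteq> 0) \<and> x \<in> st (genmod D S)"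
          by (rule star_f_char[OF D UD UM, THEN iffD1])
        then obtain S s where S: "finite S" "S \<subseteq> ?U" "s \<in> S" "s \<noteq> 0" "x \<in> st (genmod D S)" by blast
        obtain B where B: "B \<in> \<C>" "S \<subseteq> B" using finite_subset_Union_chain[OF S(1,2) C(1,2)] by blast
        have "x \<in> ?sf B" using S B by (intro star_f_char[OF D mem(1,2)[OF B(1)], THEN iffD2]) blast
        then have "x \<in> B" using mem(5)[OF B(1)] x by blast
        then show "x \<in> ?U" using B by blast
      qed
    qed
    show ?thesis unfolding \<A>_def quasi_star_ideal_def ideal_of_def using UD UM U0 U1 Uq IU by blast
  qed
  obtain M where M: "M \<in> \<A>" "\<And>X. X \<in> \<A> \<Longrightarrow> M \<subseteq> X \<Longrightarrow> X = M"
    using subset_Zorn_nonempty[OF ne chain] by blast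
  have "M \<in> QMax D ?sf"
    unfolding QMax_def
  proof (intro CollectI conjI allI impI)
    show "quasi_star_ideal D ?sf M" "M \<noteq> D" using M(1) unfolding \<A>_def by auto
    fix Q assume "quasi_star_ideal D ?sf Q \<and> Q \<noteq> D \<and> M \<subseteq> Q"
    moreover have "I \<subseteq> M" using M(1) unfolding \<A>_def by auto
    ultimately have "Q \<in> \<A>" unfolding \<A>_def by blast
    then show "Q = M" using M(2) \<open>quasi_star_ideal D ?sf Q \<and> Q \<noteq> D \<and> M \<subseteq> Q\<close> by blast
  qed
  moreover have "I \<subseteq> M" using M(1) unfolding \<A>_def by auto
  ultimately show ?thesis by blast
qed

lemma QMax_Delta1:
  assumes D: "subring D" and st: "semistar D st" and t: "transc_over (qf D) X"
    and P: "P \<in> QMax D (star_f D st)"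
  shows "polyring P X \<in> Delta1 D X st"
proof -
  note PD = QMaxD[OF P]
  have pr: "prime_ideal_of (polyring D X) (polyring P X)"
    by (rule polyring_prime[OF D t QMax_prime[OF D st P]])
  have c: "polyring P X \<inter> D = P" by (rule polyring_contract[OF D t PD(1) is_moduleD(1)[OF PD(2)]])
  have sub: "star_f D st P \<subseteq> st D"
  proof
    fix x assume "x \<in> star_f D st P"
    then have "\<exists>S. finite S \<and> S \<subseteq> P \<and> (\<exists>s\<in>S. s \<noteq> 0) \<and> x \<in> st (genmod D S)"
      by (rule star_f_char[OF D PD(1,2), THEN iffD1])
    then obtain S s where S: "finite S" "S \<subseteq> P" "s \<in> S" "s \<noteq> 0" "x \<in> st (genmod D S)" by blast
    have SD: "S \<subseteq> D" using S(2) PD(1) by blast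
    have "st (genmod D S) \<subseteq> st D"
      using semistarD(3)[OF st genmod_Fbar[OF D SD S(3,4)] D_Fbar[OF D] genmod_sub_D[OF D SD]] .
    then show "x \<in> st D" using S(5) by blast
  qed
  have "1 \<in> st D" using semistarD(4)[OF st D_Fbar[OF D]] subringD(2)[OF D] by blast
  moreover have "1 \<notin> star_f D st P"
  proof
    assume "1 \<in> star_f D st P"
    then have "1 \<in> P" using PD(4) subringD(2)[OF D] by blast
    then show False using ideal_one_notin'[OF D PD(1,2,5)] by blast
  qed
  ultimately have "star_f D st P \<subset> st D" using sub by blast
  then show ?thesis unfolding Delta1_def using pr c by simp
qed

lemma zero_Delta1:
  assumes D: "subring D" shows "{0} \<in> Delta1 D X st"
proof -
  have R: "subring (polyring D X)" by (rule polyring_subring[OF D])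
  have ne: "{0} \<noteq> polyring D X"
  proof
    assume "{0} = polyring D X"
    then have "(1::'a) \<in> {0}" using subringD(2)[OF R] by simp
    then show False by simp
  qed
  have "prime_ideal_of (polyring D X) {0}"
    unfolding prime_ideal_of_def ideal_of_def is_module_def
    using subringD(1)[OF R] ne by auto
  moreover have "{0} \<inter> D = {0}" using subringD(1)[OF D] by blast
  ultimately show ?thesis unfolding Delta1_def by blast
qed



lemma module_of_subring: "subring W \<Longrightarrow> R \<subseteq> W \<Longrightarrow> is_module R W"
  unfolding is_module_def by (auto simp: subringD)

lemma stepA:
  assumes D: "subring D" and tX: "transc_over (qf D) X"
    and u: "u \<in> qf (polyring D X)"
    and H: "H \<subseteq> polyring D X" "\<And>h. h \<in> H \<Longrightarrow> h * u \<in> polyring (qf D) X"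
    and hyp: "\<And>Q1. prime_ideal_of (polyring D X) Q1 \<Longrightarrow> Q1 \<inter> D = {0} \<Longrightarrow> \<exists>h\<in>H. h \<notin> Q1"
  shows "u \<in> polyring (qf D) X"
proof (rule ccontr)
  assume un: "u \<notin> polyring (qf D) X"
  let ?D1 = "polyring D X" and ?W = "polyring (qf D) X"
  have D1: "subring ?D1" by (rule polyring_subring[OF D])
  have K: "subring (qf D)" by (rule qf_subring[OF D])
  have W: "subring ?W" by (rule polyring_subring[OF K])
  have D1W: "?D1 \<subseteq> ?W" by (rule polyring_mono[OF qf_subset[OF D]])
  have KW: "qf D \<subseteq> ?W" using const_in_polyring[OF K] by blast
  define V where "V = {v. \<exists>w\<in>?D1. v = w * u \<and> v \<notin> ?W}"
  define Cp where "Cp v = {p. (\<forall>i. coeff p i \<in> D) \<and> p \<noteq> 0 \<and> poly p X * v \<in> ?W}" for v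
  define phi where "phi v = (LEAST n. \<exists>p\<in>Cp v. degree p = n)" for v
  obtain a b where ab: "a \<in> ?D1" "b \<in> ?D1" "b \<noteq> 0" "u = a / b" using u unfolding qf_def by blast
  obtain pb where pb: "b = poly pb X" "\<And>i. coeff pb i \<in> D" using polyringE[OF ab(2)] by blast
  have pb0: "pb \<noteq> 0" using pb ab(3) by auto
  have Cpne: "\<exists>p\<in>Cp v. degree p = degree pb" if v: "v \<in> V" for v
  proof -
    obtain w where w: "w \<in> ?D1" "v = w * u" using v unfolding V_def by blast
    have "b * v = w * a" using w ab by simp
    moreover have "w * a \<in> ?W" using subringD(5)[OF D1 w(1) ab(1)] D1W by blast
    ultimately have "pb \<in> Cp v" unfolding Cp_def using pb pb0 by simp
    then show ?thesis by blast
  qed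
  have phi_le: "phi v \<le> degree p" if "p \<in> Cp v" for v p
    unfolding phi_def by (rule Least_le[where P="\<lambda>n. \<exists>p\<in>Cp v. degree p = n"]) (use that in blast)
  have phi_ex: "\<exists>p\<in>Cp v. degree p = phi v" if "v \<in> V" for v
  proof -
    have "\<exists>n. \<exists>p\<in>Cp v. degree p = n" using Cpne[OF that] by blast
    then show ?thesis unfolding phi_def by (rule LeastI_ex[where P="\<lambda>n. \<exists>p\<in>Cp v. degree p = n"])
  qed
  have "u = 1 * u" by simp
  then have uV: "u \<in> V" unfolding V_def using un subringD(2)[OF D1] by blast
  have "\<exists>x. x \<in> V \<and> (\<forall>y. y \<in> V \<longrightarrow> phi x \<le> phi y)"
    by (rule ex_has_least_nat[where P="\<lambda>v. v \<in> V"]) (rule uV)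
  then obtain v0 where v0: "v0 \<in> V" "\<And>v. v \<in> V \<Longrightarrow> phi v0 \<le> phi v" by blast
  obtain w0 where w0: "w0 \<in> ?D1" "v0 = w0 * u" "v0 \<notin> ?W" using v0(1) unfolding V_def by blast
  obtain g where g: "g \<in> Cp v0" "degree g = phi v0" using phi_ex[OF v0(1)] by blast
  have gD: "\<And>i. coeff g i \<in> D" and g0: "g \<noteq> 0" and gv: "poly g X * v0 \<in> ?W" using g(1) unfolding Cp_def by auto
  define Q where "Q = {h \<in> ?D1. h * v0 \<in> ?W}"
  have QD1: "Q \<subseteq> ?D1" unfolding Q_def by blast
  have QM: "is_module ?D1 Q"
    unfolding is_module_def
  proof (intro conjI ballI)
    show "0 \<in> Q" unfolding Q_def using subringD(1)[OF D1] subringD(1)[OF W] by simp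
  next
    fix x y assume "x \<in> Q" "y \<in> Q"
    then show "x + y \<in> Q" unfolding Q_def using subringD(3)[OF D1] subringD(3)[OF W]
      by (simp add: distrib_right)
  next
    fix r x assume r: "r \<in> ?D1" and "x \<in> Q"
    then have x: "x \<in> ?D1" "x * v0 \<in> ?W" unfolding Q_def by auto
    have "r * (x * v0) \<in> ?W" using subringD(5)[OF W _ x(2)] r D1W by blast
    then show "r * x \<in> Q" unfolding Q_def using subringD(5)[OF D1 r x(1)] by (simp add: mult.assoc)
  qed
  have Qne: "Q \<noteq> ?D1"
  proof
    assume "Q = ?D1" then have "1 \<in> Q" using subringD(2)[OF D1] by simp
    then show False using w0(3) unfolding Q_def by simp
  qed
  have Q0: "Q \<inter> D = {0}"
  proof
    show "{0} \<subseteq> Q \<inter> D" using \<open>is_module ?D1 Q\<close> is_moduleD(1) subringD(1)[OF D] by blast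
    show "Q \<inter> D \<subseteq> {0}"
    proof
      fix c assume c: "c \<in> Q \<inter> D"
      show "c \<in> {0}"
      proof (rule ccontr)
        assume "c \<notin> {0}" then have c0: "c \<noteq> 0" by simp
        have "c * v0 \<in> ?W" using c unfolding Q_def by blast
        moreover have "1 / c \<in> ?W" using qf_inverse[OF D, of c] c qf_subset[OF D] KW by blast
        ultimately have "(1 / c) * (c * v0) \<in> ?W" using subringD(5)[OF W] by blast
        then show False using c0 w0(3) by simp
      qed
    qed
  qed
  have prime: "h1 \<in> Q \<or> h2 \<in> Q" if h: "h1 \<in> ?D1" "h2 \<in> ?D1" "h1 * h2 \<in> Q" for h1 h2
  proof (rule ccontr)
    assume nh: "\<not> (h1 \<in> Q \<or> h2 \<in> Q)"
    define v' where "v' = h1 * v0"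
    have "h1 * v0 \<notin> ?W" using nh h(1) unfolding Q_def by blast
    moreover have "h1 * v0 = (h1 * w0) * u" using w0(2) by (simp add: mult.assoc)
    ultimately have v'V: "v' \<in> V" unfolding V_def v'_def using subringD(5)[OF D1 h(1) w0(1)] by blast
    obtain p2 where p2: "h2 = poly p2 X" "\<And>i. coeff p2 i \<in> D" using polyringE[OF h(2)] by blast
    obtain k q r where qr: "smult (lead_coeff g ^ k) p2 = q * g + r" "r = 0 \<or> degree r < degree g"
      "\<forall>i. coeff q i \<in> D" "\<forall>i. coeff r i \<in> D"
      using pdiv_exists[OF D gD g0 p2(2)] by blast
    define c where "c = lead_coeff g"
    have cD: "c \<in> D" "c \<noteq> 0" unfolding c_def using gD g0 by auto
    have eq: "c ^ k * h2 = poly q X * poly g X + poly r X"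
      using arg_cong[OF qr(1), of "\<lambda>p. poly p X"] p2 unfolding c_def by simp
    have qD1: "poly q X \<in> ?D1" using qr(3) by (intro polyringI) blast
    have h12: "(h1 * h2) * v0 \<in> ?W" using h(3) unfolding Q_def by blast
    have pr: "poly r X = c ^ k * h2 - poly q X * poly g X" using eq by (simp add: algebra_simps)
    have "poly r X * v' = c ^ k * ((h1 * h2) * v0) - (poly q X * h1) * (poly g X * v0)"
      unfolding v'_def pr by (simp add: algebra_simps)
    moreover have "c ^ k \<in> ?W" using subring_power[OF D cD(1)] qf_subset[OF D] KW by blast
    moreover have "poly q X * h1 \<in> ?W" using subringD(5)[OF D1 qD1 h(1)] D1W by blast
    moreover have "c ^ k * ((h1 * h2) * v0) \<in> ?W" using subringD(5)[OF W _ h12] calculation(2) by blast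
    moreover have "(poly q X * h1) * (poly g X * v0) \<in> ?W" using subringD(5)[OF W calculation(3) gv] .
    ultimately have rv: "poly r X * v' \<in> ?W" using subringD(4)[OF W] by simp
    have r0: "r = 0"
    proof (rule ccontr)
      assume "r \<noteq> 0"
      then have "r \<in> Cp v'" unfolding Cp_def using qr(4) rv by blast
      then have "phi v' \<le> degree r" by (rule phi_le)
      moreover have "phi v0 \<le> phi v'" using v0(2)[OF v'V] .
      moreover have "degree r < degree g" using qr(2) \<open>r \<noteq> 0\<close> by blast
      ultimately show False using g(2) by simp
    qed
    have e1: "c ^ k * (h2 * v0) = poly q X * (poly g X * v0)" using eq r0 by (simp add: algebra_simps)
    have "poly q X * (poly g X * v0) \<in> ?W" using subringD(5)[OF W _ gv] qD1 D1W by blast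
    then have e2: "c ^ k * (h2 * v0) \<in> ?W" unfolding e1 .
    have inv: "1 / c ^ k \<in> ?W"
      using qf_inverse[OF D, of "c ^ k"] subring_power[OF D cD(1)] qf_subset[OF D] KW by blast
    have "(1 / c ^ k) * (c ^ k * (h2 * v0)) \<in> ?W" by (rule subringD(5)[OF W inv e2])
    then have "h2 * v0 \<in> ?W" using cD(2) by simp
    then show False using nh h(2) unfolding Q_def by blast
  qed
  have "prime_ideal_of ?D1 Q" unfolding prime_ideal_of_def ideal_of_def using QD1 QM Qne prime by blast
  from hyp[OF this Q0] obtain h where h: "h \<in> H" "h \<notin> Q" by blast
  have "h * v0 = w0 * (h * u)" using w0 by (simp add: algebra_simps)
  moreover have "w0 * (h * u) \<in> ?W" using subringD(5)[OF W _ H(2)[OF h(1)]] w0(1) D1W by blast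
  ultimately have "h * v0 \<in> ?W" by (simp only:)
  then have "h \<in> Q" unfolding Q_def using h(1) H(1) by blast
  then show False using h(2) by blast
qed



lemma qf_mono: "A \<subseteq> B \<Longrightarrow> qf A \<subseteq> qf B"
  unfolding qf_def by blast

lemma loc_multclosed:
  assumes D: "subring D" and P: "prime_ideal_of D P"
  shows "multclosed D (D - P)"
proof -
  note PD = prime_idealD[OF P]
  have "1 \<notin> P" using ideal_one_notin[of D P] P D unfolding prime_ideal_of_def by blast
  moreover have "0 \<in> P" using is_moduleD(1)[OF PD(2)] .
  moreover have "s * t \<in> D - P" if "s \<in> D - P" "t \<in> D - P" for s t
    using that PD(4) subringD(5)[OF D] by blast
  ultimately show ?thesis unfolding multclosed_def using subringD(2)[OF D] by blast
qed

lemma loc_eq: "loc D P = locset D (D - P)"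
  unfolding loc_def locset_def by simp

lemma stepB:
  assumes D: "subring D" and tX: "transc_over (qf D) X"
    and P: "prime_ideal_of D P" and E: "E \<in> Fbar D"
    and pu: "\<And>i. coeff pu i \<in> qf D" and g: "\<And>i. coeff g i \<in> D" and j0: "coeff g j0 \<notin> P"
    and mem: "poly pu X * poly g X \<in> genmod (polyring D X) E"
  shows "coeff pu i \<in> genmod (loc D P) E"
proof -
  have T: "multclosed D (D - P)" by (rule loc_multclosed[OF D P])
  have L: "subring (loc D P)" unfolding loc_eq by (rule locset_subring[OF D T])
  have DL: "D \<subseteq> loc D P" unfolding loc_eq by (rule locset_sub[OF T])
  have K: "subring (qf D)" by (rule qf_subring[OF D])
  have DK: "D \<subseteq> qf D" by (rule qf_subset[OF D])
  have EM: "is_module D E" using FbarD(2)[OF E] .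
  have EK: "E \<subseteq> qf D" using FbarD(1)[OF E] .
  let ?M = "genmod (loc D P) E"
  have M: "is_module (loc D P) ?M" by (rule genmod_module[OF L])
  have EinM: "E \<subseteq> ?M" by (rule genmod_sub[OF L])
  have "poly pu X * poly g X \<in> {poly \<eta> X | \<eta>. \<forall>k. coeff \<eta> k \<in> E}"
    using genmod_polyring_coeffs[OF D EM] mem by blast
  then obtain \<eta> where eta: "poly pu X * poly g X = poly \<eta> X" "\<And>k. coeff \<eta> k \<in> E"
    by blast
  have "pu * g = \<eta>"
  proof (rule transc_unique[OF K tX])
    show "coeff (pu * g) i \<in> qf D" for i using coeff_mult_in[OF K pu, of g] g DK by blast
    show "coeff \<eta> i \<in> qf D" for i using eta(2) EK by blast
    show "poly (pu * g) X = poly \<eta> X" using eta(1) by simp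
  qed
  have g0: "coeff g j0 \<noteq> 0" using j0 is_moduleD(1)[OF prime_idealD(2)[OF P]] by auto
  have inv: "1 / coeff g j0 \<in> loc D P" unfolding loc_eq using locset_inv[OF T D] g j0 by blast
  show ?thesis
  proof (rule mccoy[of ?M g pu])
    show "0 \<in> ?M" using is_moduleD(1)[OF M] .
    show "a + b \<in> ?M" if "a \<in> ?M" "b \<in> ?M" for a b using is_moduleD(2)[OF M] that by blast
    show "a - b \<in> ?M" if "a \<in> ?M" "b \<in> ?M" for a b using module_diff[OF M L] that by blast
    show "coeff g j * y \<in> ?M" if "y \<in> ?M" for j y using is_moduleD(3)[OF M _ that] g DL by blast
    show "y \<in> ?M" if h: "\<And>j. coeff g j * y \<in> ?M" for y
    proof -
      have "(1 / coeff g j0) * (coeff g j0 * y) \<in> ?M" using is_moduleD(3)[OF M inv h] .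
      then show ?thesis using g0 by simp
    qed
    show "coeff (pu * g) n \<in> ?M" for n using \<open>pu * g = \<eta>\<close> eta(2) EinM by blast
  qed
qed

lemma module_Inter:
  assumes "is_module R A" "\<And>N. N \<in> F \<Longrightarrow> is_module R N"
  shows "is_module R (A \<inter> \<Inter>F)"
  unfolding is_module_def
proof (intro conjI ballI)
  show "0 \<in> A \<inter> \<Inter>F" using is_moduleD(1)[OF assms(1)] is_moduleD(1)[OF assms(2)] by blast
next
  fix a b assume a: "a \<in> A \<inter> \<Inter>F" and b: "b \<in> A \<inter> \<Inter>F"
  have "a + b \<in> N" if "N \<in> F" for N using is_moduleD(2)[OF assms(2)[OF that]] a b that by blast
  then show "a + b \<in> A \<inter> \<Inter>F" using is_moduleD(2)[OF assms(1)] a b by blast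
next
  fix r a assume r: "r \<in> R" and a: "a \<in> A \<inter> \<Inter>F"
  have "r * a \<in> N" if "N \<in> F" for N using is_moduleD(3)[OF assms(2)[OF that] r] a that by blast
  then show "r * a \<in> A \<inter> \<Inter>F" using is_moduleD(3)[OF assms(1) r] a by blast
qed

lemma star_tilde_module:
  assumes D: "subring D" and st: "semistar D st"
  shows "is_module D (star_tilde D st E)" "star_tilde D st E \<subseteq> qf D"
proof -
  have m: "is_module D (genmod (loc D P) E)" if "P \<in> QMax D (star_f D st)" for P
  proof -
    have T: "multclosed D (D - P)" by (rule loc_multclosed[OF D QMax_prime[OF D st that]])
    have L: "subring (loc D P)" unfolding loc_eq by (rule locset_subring[OF D T])
    have DL: "D \<subseteq> loc D P" unfolding loc_eq by (rule locset_sub[OF T])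
    show ?thesis using module_mono_ring[OF genmod_module[OF L] DL] .
  qed
  have q: "is_module D (qf D)" by (rule module_qf[OF D])
  show "is_module D (star_tilde D st E)"
    unfolding star_tilde_def
  proof (rule module_Inter[OF q])
    fix N assume "N \<in> {genmod (loc D P) E |P. P \<in> QMax D (star_f D st)}"
    then obtain P where "N = genmod (loc D P) E" "P \<in> QMax D (star_f D st)" by blast
    then show "is_module D N" using m by blast
  qed
  show "star_tilde D st E \<subseteq> qf D" unfolding star_tilde_def by blast
qed



lemma S1_iff: "x \<in> S1 D X Y st \<longleftrightarrow> x \<in> polyring (polyring D X) Y \<and> (\<forall>Q1\<in>Delta1 D X st. x \<notin> polyring Q1 Y)"
  unfolding S1_def by blast

lemma Delta1_prime: "Q1 \<in> Delta1 D X st \<Longrightarrow> prime_ideal_of (polyring D X) Q1"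
  unfolding Delta1_def by blast

lemma D1YS_eq: "D1YS D X Y st = locset (polyring (polyring D X) Y) (S1 D X Y st)"
  unfolding D1YS_def locset_def by simp

lemma S1_multclosed:
  assumes D: "subring D" and tY: "transc_over (qf (polyring D X)) Y"
  shows "multclosed (polyring (polyring D X) Y) (S1 D X Y st)"
proof -
  let ?D1 = "polyring D X" let ?D1Y = "polyring ?D1 Y"
  have D1: "subring ?D1" by (rule polyring_subring[OF D])
  have D1Y: "subring ?D1Y" by (rule polyring_subring[OF D1])
  have pr: "prime_ideal_of ?D1Y (polyring Q1 Y)" if "Q1 \<in> Delta1 D X st" for Q1
    by (rule polyring_prime[OF D1 tY Delta1_prime[OF that]])
  have "1 \<in> S1 D X Y st" unfolding S1_iff
  proof (intro conjI ballI)
    show "1 \<in> ?D1Y" by (rule subringD(2)[OF D1Y])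
    fix Q1 assume "Q1 \<in> Delta1 D X st"
    then have "prime_ideal_of ?D1Y (polyring Q1 Y)" by (rule pr)
    then show "1 \<notin> polyring Q1 Y"
      using ideal_one_notin[OF _ _ D1Y] unfolding prime_ideal_of_def by blast
  qed
  moreover have "0 \<notin> S1 D X Y st"
  proof
    assume "0 \<in> S1 D X Y st"
    moreover have "(0::'a) \<in> polyring {0} Y" using polyringI[of 0 "{0}" Y] by simp
    ultimately show False using zero_Delta1[OF D] unfolding S1_iff by blast
  qed
  moreover have "s * t \<in> S1 D X Y st" if s: "s \<in> S1 D X Y st" and t: "t \<in> S1 D X Y st" for s t
    unfolding S1_iff
  proof (intro conjI ballI)
    show "s * t \<in> ?D1Y" using s t subringD(5)[OF D1Y] unfolding S1_iff by blast
    fix Q1 assume Q1: "Q1 \<in> Delta1 D X st"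
    show "s * t \<notin> polyring Q1 Y"
    proof
      assume "s * t \<in> polyring Q1 Y"
      moreover have "s \<in> ?D1Y" "t \<in> ?D1Y" using s t unfolding S1_iff by blast+
      ultimately have "s \<in> polyring Q1 Y \<or> t \<in> polyring Q1 Y"
        using prime_idealD(4)[OF pr[OF Q1]] by blast
      then show False using s t Q1 unfolding S1_iff by blast
    qed
  qed
  moreover have "S1 D X Y st \<subseteq> ?D1Y" unfolding S1_def by blast
  ultimately show ?thesis unfolding multclosed_def by blast
qed



lemma L2:
  assumes D: "subring D" and tX: "transc_over (qf D) X" and tY: "transc_over (qf (polyring D X)) Y"
    and st: "semistar D st" and E: "E \<in> Fbar D"
  shows "star_tilde D st E \<subseteq> genmod (D1YS D X Y st) E"
proof
  fix z assume z: "z \<in> star_tilde D st E"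
  let ?D1 = "polyring D X" let ?D1Y = "polyring ?D1 Y" let ?R = "D1YS D X Y st"
  let ?S1 = "S1 D X Y st"
  have D1: "subring ?D1" by (rule polyring_subring[OF D])
  have D1Y: "subring ?D1Y" by (rule polyring_subring[OF D1])
  have T: "multclosed ?D1Y ?S1" by (rule S1_multclosed[OF D tY])
  have R: "subring ?R" unfolding D1YS_eq by (rule locset_subring[OF D1Y T])
  have D1YR: "?D1Y \<subseteq> ?R" unfolding D1YS_eq by (rule locset_sub[OF T])
  have DD1: "D \<subseteq> ?D1" using const_in_polyring[OF D] by blast
  have D1D1Y: "?D1 \<subseteq> ?D1Y" using const_in_polyring[OF D1] by blast
  have EM: "is_module D E" using FbarD(2)[OF E] .
  have EK: "E \<subseteq> qf D" using FbarD(1)[OF E] .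
  have zK: "z \<in> qf D" using z unfolding star_tilde_def by blast
  have zP: "z \<in> genmod (loc D P) E" if "P \<in> QMax D (star_f D st)" for P
    using z that unfolding star_tilde_def by blast
  define I where "I = {a \<in> D. a * z \<in> E}"
  have ID: "I \<subseteq> D" unfolding I_def by blast
  have IM: "is_module D I"
    unfolding is_module_def
  proof (intro conjI ballI)
    show "0 \<in> I" unfolding I_def using subringD(1)[OF D] is_moduleD(1)[OF EM] by simp
  next
    fix a b assume "a \<in> I" "b \<in> I"
    then show "a + b \<in> I" unfolding I_def using subringD(3)[OF D] is_moduleD(2)[OF EM]
      by (simp add: distrib_right)
  next
    fix r a assume r: "r \<in> D" and "a \<in> I"
    then have a: "a \<in> D" "a * z \<in> E" unfolding I_def by auto
    have "r * (a * z) \<in> E" by (rule is_moduleD(3)[OF EM r a(2)])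
    then show "r * a \<in> I" unfolding I_def using subringD(5)[OF D r a(1)] by (simp add: mult.assoc)
  qed
  have I0: "I \<noteq> {0}"
  proof -
    obtain e where e: "e \<in> E" "e \<noteq> 0" using FbarD(3)[OF E] is_moduleD(1)[OF EM] by blast
    obtain c d where cd: "c \<in> D" "d \<in> D" "d \<noteq> 0" "e = c / d" using e(1) EK unfolding qf_def by blast
    obtain a b where ab: "a \<in> D" "b \<in> D" "b \<noteq> 0" "z = a / b" using zK unfolding qf_def by blast
    have c0: "c \<noteq> 0" using cd e by auto
    have "(b * c) * z = (a * d) * e" using ab cd by (simp add: field_simps)
    moreover have "(a * d) * e \<in> E" using is_moduleD(3)[OF EM subringD(5)[OF D ab(1) cd(2)] e(1)] .
    ultimately have "b * c \<in> I" unfolding I_def using subringD(5)[OF D ab(2) cd(1)] by simp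
    moreover have "b * c \<noteq> 0" using ab c0 by simp
    ultimately show ?thesis by blast
  qed
  have notin: "\<not> I \<subseteq> P" if P: "P \<in> QMax D (star_f D st)" for P
  proof
    assume IP: "I \<subseteq> P"
    have Tp: "multclosed D (D - P)" by (rule loc_multclosed[OF D QMax_prime[OF D st P]])
    have "z \<in> {y. \<exists>t\<in>D - P. t * y \<in> E}"
      using locmod[OF D Tp EM] zP[OF P] unfolding loc_eq by blast
    then obtain t where t: "t \<in> D - P" "t * z \<in> E" by blast
    then have "t \<in> I" unfolding I_def by blast
    then show False using IP t by blast
  qed
  obtain S s where S: "finite S" "S \<subseteq> I" "s \<in> S" "s \<noteq> 0" "1 \<in> st (genmod D S)"
  proof -
    have "\<not> (\<forall>S s. finite S \<longrightarrow> S \<subseteq> I \<longrightarrow> s \<in> S \<longrightarrow> s \<noteq> 0 \<longrightarrow> 1 \<notin> st (genmod D S))"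
    proof
      assume h: "\<forall>S s. finite S \<longrightarrow> S \<subseteq> I \<longrightarrow> s \<in> S \<longrightarrow> s \<noteq> 0 \<longrightarrow> 1 \<notin> st (genmod D S)"
      have "\<exists>P \<in> QMax D (star_f D st). I \<subseteq> P"
        by (rule exists_QMax[OF D st ID IM I0]) (use h in blast)
      then show False using notin by blast
    qed
    then show ?thesis using that by blast
  qed
  obtain xs where xs: "set xs = S" using finite_list[OF S(1)] by blast
  define p where "p = Poly xs"
  have cp: "coeff p i \<in> S \<or> coeff p i = 0" for i
    unfolding p_def coeff_Poly_eq using xs
    by (cases "i < length xs") (auto simp: nth_default_nth nth_default_beyond)
  have cpS: "\<exists>i. coeff p i = s'" if s': "s' \<in> S" for s'
  proof -
    have "s' \<in> set xs" using s' xs by simp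
    then obtain i where "i < length xs" "xs ! i = s'" by (auto simp: in_set_conv_nth)
    then have "coeff p i = s'" unfolding p_def coeff_Poly_eq by (simp add: nth_default_nth)
    then show ?thesis by blast
  qed
  have cpD: "coeff p i \<in> D" for i using cp[of i] S(2) ID subringD(1)[OF D] by auto
  define f where "f = poly p Y"
  have fD1Y: "f \<in> ?D1Y" unfolding f_def by (rule polyringI) (use cpD DD1 in blast)
  have K1: "subring (qf ?D1)" by (rule qf_subring[OF D1])
  have D1K1: "?D1 \<subseteq> qf ?D1" by (rule qf_subset[OF D1])
  have fnot: "f \<notin> polyring Q1 Y" if Q1: "Q1 \<in> Delta1 D X st" for Q1
  proof
    assume "f \<in> polyring Q1 Y"
    then obtain q where q: "f = poly q Y" "\<And>i. coeff q i \<in> Q1" using polyringE by blast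
    have Q1D1: "Q1 \<subseteq> ?D1" using prime_idealD(1)[OF Delta1_prime[OF Q1]] .
    have "p = q"
    proof (rule transc_unique[OF K1 tY])
      show "coeff p i \<in> qf ?D1" for i using cpD DD1 D1K1 by blast
      show "coeff q i \<in> qf ?D1" for i using q(2) Q1D1 D1K1 by blast
      show "poly p Y = poly q Y" using q(1) unfolding f_def .
    qed
    have SQ: "S \<subseteq> Q1 \<inter> D"
    proof
      fix s' assume s': "s' \<in> S"
      obtain i where "coeff p i = s'" using cpS[OF s'] by blast
      then have "s' \<in> Q1" using q(2)[of i] \<open>p = q\<close> by simp
      then show "s' \<in> Q1 \<inter> D" using s' S(2) ID by blast
    qed
    have "Q1 \<inter> D = {0} \<or> (Q1 = polyring (Q1 \<inter> D) X \<and> star_f D st (Q1 \<inter> D) \<subset> st D)"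
      using Q1 unfolding Delta1_def by blast
    then show False
    proof
      assume "Q1 \<inter> D = {0}" then show False using SQ S(3,4) by blast
    next
      assume h: "Q1 = polyring (Q1 \<inter> D) X \<and> star_f D st (Q1 \<inter> D) \<subset> st D"
      have JD: "Q1 \<inter> D \<subseteq> D" by blast
      have JM: "is_module D (Q1 \<inter> D)"
      proof -
        have "is_module ?D1 Q1" using prime_idealD(2)[OF Delta1_prime[OF Q1]] .
        then have M1: "is_module D Q1" using module_mono_ring DD1 by blast
        show ?thesis unfolding is_module_def
        proof (intro conjI ballI)
          show "0 \<in> Q1 \<inter> D" using is_moduleD(1)[OF M1] subringD(1)[OF D] by blast
          fix a b assume "a \<in> Q1 \<inter> D" "b \<in> Q1 \<inter> D"
          then show "a + b \<in> Q1 \<inter> D" using is_moduleD(2)[OF M1] subringD(3)[OF D] by blast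
        next
          fix r a assume "r \<in> D" "a \<in> Q1 \<inter> D"
          then show "r * a \<in> Q1 \<inter> D" using is_moduleD(3)[OF M1] subringD(5)[OF D] by blast
        qed
      qed
      have SD: "S \<subseteq> D" using S(2) ID by blast
      have GF: "genmod D S \<in> Fbar D" by (rule genmod_Fbar[OF D SD S(3,4)])
      have "st D \<subseteq> st (genmod D S)" by (rule one_in_st_imp[OF D st GF S(5)])
      moreover have "st (genmod D S) \<subseteq> star_f D st (Q1 \<inter> D)"
      proof
        fix x assume "x \<in> st (genmod D S)"
        then show "x \<in> star_f D st (Q1 \<inter> D)"
          using S(1,3,4) SQ by (intro star_f_char[OF D JD JM, THEN iffD2]) blast
      qed
      ultimately show False using h by blast
    qed
  qed
  have fS1: "f \<in> ?S1" unfolding S1_iff using fD1Y fnot by blast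
  have f0: "f \<noteq> 0" using fS1 T unfolding multclosed_def by blast
  have GM: "is_module ?D1Y (genmod ?D1Y E)" by (rule genmod_module[OF D1Y])
  have fz: "z * f \<in> genmod ?D1Y E"
  proof -
    have "z * f = (\<Sum>i\<le>degree p. Y ^ i * (coeff p i * z))"
      unfolding f_def poly_altdef by (simp add: sum_distrib_left algebra_simps)
    moreover have "Y ^ i * (coeff p i * z) \<in> genmod ?D1Y E" for i
    proof -
      have "coeff p i * z \<in> E" using cp[of i] S(2) is_moduleD(1)[OF EM] unfolding I_def by auto
      then have "coeff p i * z \<in> genmod ?D1Y E" using genmod_sub[OF D1Y] by blast
      moreover have "Y ^ i \<in> ?D1Y" using subring_power[OF D1Y var_in_polyring[OF D1]] .
      ultimately show ?thesis by (rule is_moduleD(3)[OF GM, rotated])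
    qed
    ultimately show ?thesis using module_sum[OF GM, of "{..degree p}" "\<lambda>i. Y ^ i * (coeff p i * z)"] by simp
  qed
  have GR: "is_module ?R (genmod ?R E)" by (rule genmod_module[OF R])
  have "z * f \<in> genmod ?R E" using fz genmod_mono_ring[OF D1YR] by blast
  moreover have "1 / f \<in> ?R" unfolding D1YS_eq using locset_inv[OF T D1Y fS1] .
  ultimately have "(1 / f) * (z * f) \<in> genmod ?R E" using is_moduleD(3)[OF GR] by blast
  then show "z \<in> genmod ?R E" using f0 by simp
qed



lemma L1:
  assumes D: "subring D" and tX: "transc_over (qf D) X" and tY: "transc_over (qf (polyring D X)) Y"
    and st: "semistar D st" and E: "E \<in> Fbar D"
  shows "genmod (D1YS D X Y st) E \<inter> qf (polyring D X) \<subseteq> genmod (polyring D X) (star_tilde D st E)"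
proof
  fix u assume u: "u \<in> genmod (D1YS D X Y st) E \<inter> qf (polyring D X)"
  let ?D1 = "polyring D X" let ?D1Y = "polyring ?D1 Y" let ?R = "D1YS D X Y st"
  let ?S1 = "S1 D X Y st" let ?W = "polyring (qf D) X"
  have D1: "subring ?D1" by (rule polyring_subring[OF D])
  have D1Y: "subring ?D1Y" by (rule polyring_subring[OF D1])
  have T: "multclosed ?D1Y ?S1" by (rule S1_multclosed[OF D tY])
  have K: "subring (qf D)" by (rule qf_subring[OF D])
  have K1: "subring (qf ?D1)" by (rule qf_subring[OF D1])
  have W: "subring ?W" by (rule polyring_subring[OF K])
  have DD1: "D \<subseteq> ?D1" using const_in_polyring[OF D] by blast
  have DK: "D \<subseteq> qf D" by (rule qf_subset[OF D])
  have D1K1: "?D1 \<subseteq> qf ?D1" by (rule qf_subset[OF D1])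
  have KK1: "qf D \<subseteq> qf ?D1" by (rule qf_mono[OF DD1])
  have D1W: "?D1 \<subseteq> ?W" by (rule polyring_mono[OF DK])
  have KW: "qf D \<subseteq> ?W" using const_in_polyring[OF K] by blast
  have EM: "is_module D E" using FbarD(2)[OF E] .
  have EK: "E \<subseteq> qf D" using FbarD(1)[OF E] .
  have uR: "u \<in> genmod ?R E" and uK1: "u \<in> qf ?D1" using u by auto
  have G1M: "is_module ?D1Y (genmod ?D1Y E)" by (rule genmod_module[OF D1Y])
  have "u \<in> genmod ?R (genmod ?D1Y E)" using uR genmod_mono[OF genmod_sub[OF D1Y]] by blast
  then have "u \<in> {y. \<exists>t\<in>?S1. t * y \<in> genmod ?D1Y E}"
    using locmod[OF D1Y T G1M] unfolding D1YS_eq by blast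
  then obtain s where s: "s \<in> ?S1" "s * u \<in> genmod ?D1Y E" by blast
  have sD1Y: "s \<in> ?D1Y" using s(1) unfolding S1_iff by blast
  obtain \<sigma> where sig: "s = poly \<sigma> Y" "\<And>k. coeff \<sigma> k \<in> ?D1" using polyringE[OF sD1Y] by blast
  have GD1M: "is_module ?D1 (genmod ?D1 E)" by (rule genmod_module[OF D1])
  have "genmod ?D1Y E \<subseteq> genmod ?D1Y (genmod ?D1 E)" by (rule genmod_mono[OF genmod_sub[OF D1]])
  also have "\<dots> \<subseteq> {poly \<eta> Y | \<eta>. \<forall>k. coeff \<eta> k \<in> genmod ?D1 E}" by (rule genmod_polyring_coeffs[OF D1 GD1M])
  finally obtain \<eta> where eta: "s * u = poly \<eta> Y" "\<And>k. coeff \<eta> k \<in> genmod ?D1 E" using s(2) by blast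
  have GK1: "genmod ?D1 E \<subseteq> qf ?D1" by (rule genmod_least[OF module_qf[OF D1]]) (use EK KK1 in blast)
  have "smult u \<sigma> = \<eta>"
  proof (rule transc_unique[OF K1 tY])
    show "coeff (smult u \<sigma>) i \<in> qf ?D1" for i using subringD(5)[OF K1 uK1] sig(2) D1K1 by auto
    show "coeff \<eta> i \<in> qf ?D1" for i using eta(2) GK1 by blast
    show "poly (smult u \<sigma>) Y = poly \<eta> Y" using eta(1) sig(1) by (simp add: mult.commute)
  qed
  then have "coeff (smult u \<sigma>) k \<in> genmod ?D1 E" for k using eta(2)[of k] by simp
  then have hk: "coeff \<sigma> k * u \<in> genmod ?D1 E" for k by (simp add: mult.commute)
  have sQ: "\<exists>k. coeff \<sigma> k \<notin> Q1" if Q1: "Q1 \<in> Delta1 D X st" for Q1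
  proof (rule ccontr)
    assume "\<not> ?thesis"
    then have "s \<in> polyring Q1 Y" unfolding sig(1) by (intro polyringI) blast
    then show False using s(1) Q1 unfolding S1_iff by blast
  qed
  have GW: "genmod ?D1 E \<subseteq> ?W" by (rule genmod_least[OF module_of_subring[OF W D1W]]) (use EK KW in blast)
  have uW: "u \<in> ?W"
  proof (rule stepA[OF D tX uK1, of "range (coeff \<sigma>)"])
    show "range (coeff \<sigma>) \<subseteq> ?D1" using sig(2) by blast
    show "h * u \<in> ?W" if "h \<in> range (coeff \<sigma>)" for h using that hk GW by blast
    show "\<exists>h\<in>range (coeff \<sigma>). h \<notin> Q1" if "prime_ideal_of ?D1 Q1" "Q1 \<inter> D = {0}" for Q1
    proof -
      have "Q1 \<in> Delta1 D X st" unfolding Delta1_def using that by blast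
      then show ?thesis using sQ by blast
    qed
  qed
  obtain pu where pu: "u = poly pu X" "\<And>i. coeff pu i \<in> qf D" using polyringE[OF uW] by blast
  have cST: "coeff pu i \<in> star_tilde D st E" for i
  proof -
    have "coeff pu i \<in> genmod (loc D P) E" if P: "P \<in> QMax D (star_f D st)" for P
    proof -
      have "polyring P X \<in> Delta1 D X st" by (rule QMax_Delta1[OF D st tX P])
      then obtain k where k: "coeff \<sigma> k \<notin> polyring P X" using sQ by blast
      obtain g where g: "coeff \<sigma> k = poly g X" "\<And>i. coeff g i \<in> D" using polyringE[OF sig(2)[of k]] by blast
      have "\<exists>j. coeff g j \<notin> P"
      proof (rule ccontr)
        assume "\<not> ?thesis"
        then have "coeff \<sigma> k \<in> polyring P X" unfolding g(1) by (intro polyringI) blast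
        then show False using k by blast
      qed
      then obtain j where j: "coeff g j \<notin> P" by blast
      have "poly pu X * poly g X \<in> genmod ?D1 E" using hk[of k] pu(1) g(1) by (simp add: mult.commute)
      then show ?thesis by (rule stepB[OF D tX QMax_prime[OF D st P] E pu(2) g(2) j])
    qed
    then show ?thesis unfolding star_tilde_def using pu(2) by blast
  qed
  have STM: "is_module D (star_tilde D st E)" by (rule star_tilde_module(1)[OF D st])
  have GSM: "is_module ?D1 (genmod ?D1 (star_tilde D st E))" by (rule genmod_module[OF D1])
  have "u = (\<Sum>i\<le>degree pu. X ^ i * coeff pu i)" unfolding pu(1) poly_altdef by (simp add: mult.commute)
  moreover have "X ^ i * coeff pu i \<in> genmod ?D1 (star_tilde D st E)" for i
  proof -
    have "coeff pu i \<in> genmod ?D1 (star_tilde D st E)" using cST genmod_sub[OF D1] by blast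
    moreover have "X ^ i \<in> ?D1" using subring_power[OF D1 var_in_polyring[OF D]] .
    ultimately show ?thesis by (rule is_moduleD(3)[OF GSM, rotated])
  qed
  ultimately show "u \<in> genmod ?D1 (star_tilde D st E)"
    using module_sum[OF GSM, of "{..degree pu}" "\<lambda>i. X ^ i * coeff pu i"] by simp
qed



theorem theorem2p3:
  fixes D :: "'a::field set" and X Y :: 'a and st :: "'a set \<Rightarrow> 'a set" and E :: "'a set"
  assumes "subring D"
    and "transc_over (qf D) X"
    and "transc_over (qf (polyring D X)) Y"
    and "semistar D st"
    and "E \<in> Fbar D"
  shows "bracket_star D X Y st (genmod (polyring D X) E) \<inter> qf D
           = genmod (D1YS D X Y st) E \<inter> qf D
         \<and> genmod (D1YS D X Y st) E \<inter> qf D = star_tilde D st E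
         \<and> bracket_star D X Y st (genmod (polyring D X) E)
           = genmod (polyring D X) (star_tilde D st E)"
proof -
  note D = assms(1) and tX = assms(2) and tY = assms(3) and st = assms(4) and E = assms(5)
  let ?D1 = "polyring D X" let ?D1Y = "polyring ?D1 Y" let ?R = "D1YS D X Y st"
  let ?S1 = "S1 D X Y st" let ?ST = "star_tilde D st E"
  have D1: "subring ?D1" by (rule polyring_subring[OF D])
  have D1Y: "subring ?D1Y" by (rule polyring_subring[OF D1])
  have T: "multclosed ?D1Y ?S1" by (rule S1_multclosed[OF D tY])
  have R: "subring ?R" unfolding D1YS_eq by (rule locset_subring[OF D1Y T])
  have D1YR: "?D1Y \<subseteq> ?R" unfolding D1YS_eq by (rule locset_sub[OF T])
  have DD1: "D \<subseteq> ?D1" using const_in_polyring[OF D] by blast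
  have D1D1Y: "?D1 \<subseteq> ?D1Y" using const_in_polyring[OF D1] by blast
  have D1R: "?D1 \<subseteq> ?R" using D1D1Y D1YR by blast
  have K: "subring (qf D)" by (rule qf_subring[OF D])
  have KK1: "qf D \<subseteq> qf ?D1" by (rule qf_mono[OF DD1])
  have GR: "is_module ?R (genmod ?R E)" by (rule genmod_module[OF R])
  have eqR: "genmod ?R (genmod ?D1 E) = genmod ?R E"
  proof
    have "genmod ?D1 E \<subseteq> genmod ?R E"
      by (rule genmod_least[OF module_mono_ring[OF GR D1R] genmod_sub[OF R]])
    then show "genmod ?R (genmod ?D1 E) \<subseteq> genmod ?R E" by (rule genmod_least[OF GR])
    show "genmod ?R E \<subseteq> genmod ?R (genmod ?D1 E)" by (rule genmod_mono[OF genmod_sub[OF D1]])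
  qed
  have br: "bracket_star D X Y st (genmod ?D1 E) = genmod ?R E \<inter> qf ?D1"
    unfolding bracket_star_def eqR ..
  have l1: "genmod ?R E \<inter> qf ?D1 \<subseteq> genmod ?D1 ?ST" by (rule L1[OF D tX tY st E])
  have l2: "?ST \<subseteq> genmod ?R E" by (rule L2[OF D tX tY st E])
  have STM: "is_module D ?ST" and STK: "?ST \<subseteq> qf D" using star_tilde_module[OF D st] by auto
  have c1: "bracket_star D X Y st (genmod ?D1 E) \<inter> qf D = genmod ?R E \<inter> qf D"
    unfolding br using KK1 by blast
  have d: "genmod ?R E \<inter> qf ?D1 = genmod ?D1 ?ST"
  proof
    show "genmod ?R E \<inter> qf ?D1 \<subseteq> genmod ?D1 ?ST" by (rule l1)
    have "genmod ?D1 ?ST \<subseteq> genmod ?R E" by (rule genmod_least[OF module_mono_ring[OF GR D1R] l2])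
    moreover have "genmod ?D1 ?ST \<subseteq> qf ?D1" by (rule genmod_least[OF module_qf[OF D1]]) (use STK KK1 in blast)
    ultimately show "genmod ?D1 ?ST \<subseteq> genmod ?R E \<inter> qf ?D1" by blast
  qed
  have c2: "genmod ?R E \<inter> qf D = ?ST"
  proof
    show "?ST \<subseteq> genmod ?R E \<inter> qf D" using l2 STK by blast
    show "genmod ?R E \<inter> qf D \<subseteq> ?ST"
    proof
      fix x assume x: "x \<in> genmod ?R E \<inter> qf D"
      then have "x \<in> genmod ?D1 ?ST" using l1 KK1 by blast
      then have "x \<in> {poly \<eta> X | \<eta>. \<forall>k. coeff \<eta> k \<in> ?ST}" using genmod_polyring_coeffs[OF D STM] by blast
      then obtain \<eta> where eta: "x = poly \<eta> X" "\<And>k. coeff \<eta> k \<in> ?ST" by blast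
      have "[:x:] = \<eta>"
      proof (rule transc_unique[OF K tX])
        show "coeff [:x:] i \<in> qf D" for i using x subringD(1)[OF K] by (cases i) auto
        show "coeff \<eta> i \<in> qf D" for i using eta(2) STK by blast
        show "poly [:x:] X = poly \<eta> X" using eta(1) by simp
      qed
      then have "x = coeff \<eta> 0" by (metis coeff_pCons_0)
      then show "x \<in> ?ST" using eta(2) by simp
    qed
  qed
  show ?thesis using c1 c2 d br by simp
qed


end
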